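(* Let $M$ be a mode for a program $P_1$, and assume that $P_1$ is safe w.r.t. $M$ and $P_1$ satisfies $M$. Let $C_1: H\leftarrow G_1,G_2,t_1\neq t_2,G_3$ be a clause in $P_1$, and let $P_2$ be the program derived from $P_1$ by replacing $C_1$ by the clause $C_2: H\leftarrow G_1,t_1\neq t_2,G_2,G_3$. Then (i) $P_2$ is safe w.r.t. $M$, (ii) $P_2$ satisfies $M$, and (iii) for each non-basic atom $A$ which satisfies $M$, $A$ succeeds in $P_1$ iff $A$ succeeds in $P_2$.
   Context: Syntax. Predicate symbols $\mathit{true}$, $=$, $\neq$ are basic, all others non-basic; function symbols form an infinite set. Basic atoms: $\mathit{true}$, $t_1=t_2$, $t_1\neq t_2$ (disequation); non-basic atoms: $p(t_1,\dots,t_m)$ with $p$ non-basic. A goal is a conjunction of atoms ("," associative, neutral element $\mathit{true}$). A clause $C$ is $A\leftarrow G$ with non-basic head $hd(C)=A$ and body $bd(C)=G$; a program is a set of clauses. All mgu's are relevant and idempotent. A variable $X$ is a local variable of goal $G$ in clause $H\leftarrow G_1,G,G_2$ iff $X\in vars(G)-vars(H,G_1,G_2)$. Operational semantics (for program $P$): (1) $(t_1=t_2,G)\longmapsto_P G\vartheta$ if $t_1,t_2$ unify with mgu $\vartheta$; (2) $(t_1\neq t_2,G)\longmapsto_P G$ if $t_1,t_2$ are not unifiable; (3) $(A,G)\longmapsto_P(bd(C),G)\vartheta$ if $A$ is non-basic, $C$ is a renamed apart (fresh variables) clause of $P$ and $\vartheta$ is an mgu of $A$ and $hd(C)$. A goal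 $G_0$ succeeds in $P$ iff $G_0\longmapsto_P\cdots\longmapsto_P\mathit{true}$. $\longmapsto^*_P$ is the reflexive-transitive closure. Modes. A mode for a non-basic predicate $p$ of arity $h$ is $p(m_1,\dots,m_h)$, $m_i\in\{+,?\}$; argument $t_i$ of $p(t_1,\dots,t_h)$ is an input argument iff $m_i=+$, and variables in input arguments are input variables of the atom. A mode for a program is a set containing exactly one mode for each non-basic predicate occurring in it. An atom satisfies $M$ iff $M$ has a mode for its predicate and its input arguments are ground. A program $P$ satisfies $M$ iff for every non-basic atom $A_0$ satisfying $M$ and every non-basic atom $A$ and goal $G$ with $A_0\longmapsto^*_P(A,G)$, $A$ satisfies $M$. A clause $C$ is safe w.r.t. $M$ iff every variable of every disequation $t_1\neq t_2$ in $bd(C)$ is an input variable of $hd(C)$ or a local variable of $t_1\neq t_2$ in $C$; a program is safe iff all its clauses are. *)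

theory Defs
  imports Main "HOL-Library.Infinite_Typeclass"
begin

text \<open>Variables are natural numbers (an infinite supply, needed for renaming apart);
  function symbols range over an infinite type 'f (arity is given by the argument list).\<close>

datatype 'f "term" = Var nat | Fn 'f "'f term list"

fun tvars :: "'f term \<Rightarrow> nat set" where
  "tvars (Var x) = {x}"
| "tvars (Fn f ts) = (\<Union>t\<in>set ts. tvars t)"

type_synonym 'f subst = "nat \<Rightarrow> 'f term"

fun tsubst :: "'f term \<Rightarrow> 'f subst \<Rightarrow> 'f term" where
  "tsubst (Var x) \<sigma> = \<sigma> x"
| "tsubst (Fn f ts) \<sigma> = Fn f (map (\<lambda>t. tsubst t \<sigma>) ts)"

definition ground :: "'f term \<Rightarrow> bool" where
  "ground t \<longleftrightarrow> tvars t = {}"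

text \<open>Atoms occurring in goals. The basic atom true is the neutral element of
  conjunction, so goals are lists of atoms and true is the empty goal.\<close>

datatype ('p, 'f) atom =
    Eq "'f term" "'f term"
  | Neq "'f term" "'f term"
  | Pred 'p "'f term list"

type_synonym ('p, 'f) goal = "('p, 'f) atom list"

fun nonbasic :: "('p, 'f) atom \<Rightarrow> bool" where
  "nonbasic (Pred p ts) = True"
| "nonbasic _ = False"

fun avars :: "('p, 'f) atom \<Rightarrow> nat set" where
  "avars (Eq s t) = tvars s \<union> tvars t"
| "avars (Neq s t) = tvars s \<union> tvars t"
| "avars (Pred p ts) = (\<Union>t\<in>set ts. tvars t)"

definition gvars :: "('p, 'f) goal \<Rightarrow> nat set" where
  "gvars G = (\<Union>A\<in>set G. avars A)"

fun asubst :: "('p, 'f) atom \<Rightarrow> 'f subst \<Rightarrow> ('p, 'f) atom" where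
  "asubst (Eq s t) \<sigma> = Eq (tsubst s \<sigma>) (tsubst t \<sigma>)"
| "asubst (Neq s t) \<sigma> = Neq (tsubst s \<sigma>) (tsubst t \<sigma>)"
| "asubst (Pred p ts) \<sigma> = Pred p (map (\<lambda>t. tsubst t \<sigma>) ts)"

definition gsubst :: "('p, 'f) goal \<Rightarrow> 'f subst \<Rightarrow> ('p, 'f) goal" where
  "gsubst G \<sigma> = map (\<lambda>A. asubst A \<sigma>) G"

text \<open>A clause is a pair (head, body); the head is a non-basic atom p(ts),
  represented by the pair (p, ts). A program is a set of clauses.\<close>

type_synonym ('p, 'f) clause = "('p \<times> 'f term list) \<times> ('p, 'f) goal"

definition hd_atom :: "('p, 'f) clause \<Rightarrow> ('p, 'f) atom" where
  "hd_atom C = Pred (fst (fst C)) (snd (fst C))"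

definition bd :: "('p, 'f) clause \<Rightarrow> ('p, 'f) goal" where
  "bd C = snd C"

definition cvars :: "('p, 'f) clause \<Rightarrow> nat set" where
  "cvars C = avars (hd_atom C) \<union> gvars (bd C)"

definition rename_term :: "(nat \<Rightarrow> nat) \<Rightarrow> 'f term \<Rightarrow> 'f term" where
  "rename_term \<rho> t = tsubst t (\<lambda>x. Var (\<rho> x))"

definition rename_clause :: "(nat \<Rightarrow> nat) \<Rightarrow> ('p, 'f) clause \<Rightarrow> ('p, 'f) clause" where
  "rename_clause \<rho> C =
     ((fst (fst C), map (rename_term \<rho>) (snd (fst C))), gsubst (bd C) (\<lambda>x. Var (\<rho> x)))"

definition unifies :: "'f subst \<Rightarrow> ('f term \<times> 'f term) list \<Rightarrow> bool" where
  "unifies \<sigma> E \<longleftrightarrow> (\<forall>(s, t)\<in>set E. tsubst s \<sigma> = tsubst t \<sigma>)"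

definition eqvars :: "('f term \<times> 'f term) list \<Rightarrow> nat set" where
  "eqvars E = (\<Union>(s, t)\<in>set E. tvars s \<union> tvars t)"

definition is_mgu :: "'f subst \<Rightarrow> ('f term \<times> 'f term) list \<Rightarrow> bool" where
  "is_mgu \<sigma> E \<longleftrightarrow>
     unifies \<sigma> E
   \<and> (\<forall>\<tau>. unifies \<tau> E \<longrightarrow> (\<exists>\<rho>. \<forall>x. \<tau> x = tsubst (\<sigma> x) \<rho>))
   \<and> (\<forall>x. tsubst (\<sigma> x) \<sigma> = \<sigma> x)
   \<and> (\<forall>x. \<sigma> x \<noteq> Var x \<longrightarrow> x \<in> eqvars E \<and> tvars (\<sigma> x) \<subseteq> eqvars E)"

fun atom_eqs :: "('p, 'f) atom \<Rightarrow> ('p, 'f) atom \<Rightarrow> ('f term \<times> 'f term) list option" where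
  "atom_eqs (Pred p ss) (Pred q ts) =
     (if p = q \<and> length ss = length ts then Some (zip ss ts) else None)"
| "atom_eqs _ _ = None"

inductive step :: "('p, 'f) clause set \<Rightarrow> ('p, 'f) goal \<Rightarrow> ('p, 'f) goal \<Rightarrow> bool" for P where
  eq: "is_mgu \<theta> [(t1, t2)] \<Longrightarrow> step P (Eq t1 t2 # G) (gsubst G \<theta>)"
| neq: "\<not> (\<exists>\<tau>. tsubst t1 \<tau> = tsubst t2 \<tau>) \<Longrightarrow> step P (Neq t1 t2 # G) G"
| res: "\<lbrakk> nonbasic A; C \<in> P; inj \<rho>; C' = rename_clause \<rho> C;
          cvars C' \<inter> gvars (A # G) = {};
          atom_eqs A (hd_atom C') = Some E; is_mgu \<theta> E \<rbrakk>
        \<Longrightarrow> step P (A # G) (gsubst (bd C' @ G) \<theta>)"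

definition steps :: "('p, 'f) clause set \<Rightarrow> ('p, 'f) goal \<Rightarrow> ('p, 'f) goal \<Rightarrow> bool" where
  "steps P = (step P)\<^sup>*\<^sup>*"

definition succeeds :: "('p, 'f) goal \<Rightarrow> ('p, 'f) clause set \<Rightarrow> bool" where
  "succeeds G P \<longleftrightarrow> steps P G []"

text \<open>A mode for predicate p of arity h is represented by (p, ms) with ms a bool list
  of length h; ms ! i = True means m_(i+1) = +, False means ?.
  A mode (for a program) is a set of such pairs.\<close>

type_synonym 'p mode = "('p \<times> bool list) set"

definition preds_goal :: "('p, 'f) goal \<Rightarrow> ('p \<times> nat) set" where
  "preds_goal G = {(p, length ts) | p ts. Pred p ts \<in> set G}"

definition preds_prog :: "('p, 'f) clause set \<Rightarrow> ('p \<times> nat) set" where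
  "preds_prog P = (\<Union>C\<in>P. preds_goal (hd_atom C # bd C))"

definition mode_for_program :: "'p mode \<Rightarrow> ('p, 'f) clause set \<Rightarrow> bool" where
  "mode_for_program M P \<longleftrightarrow>
     (\<forall>(p, ms)\<in>M. (p, length ms) \<in> preds_prog P)
   \<and> (\<forall>(p, n)\<in>preds_prog P. \<exists>!ms. (p, ms) \<in> M \<and> length ms = n)"

fun atom_sat :: "('p, 'f) atom \<Rightarrow> 'p mode \<Rightarrow> bool" where
  "atom_sat (Pred p ts) M \<longleftrightarrow>
     (\<exists>ms. (p, ms) \<in> M \<and> length ms = length ts \<and>
           (\<forall>i<length ts. ms ! i \<longrightarrow> ground (ts ! i)))"
| "atom_sat _ M \<longleftrightarrow> False"

definition prog_sat :: "('p, 'f) clause set \<Rightarrow> 'p mode \<Rightarrow> bool" where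
  "prog_sat P M \<longleftrightarrow>
     (\<forall>A0 A G. nonbasic A0 \<longrightarrow> atom_sat A0 M \<longrightarrow> steps P [A0] (A # G) \<longrightarrow>
        nonbasic A \<longrightarrow> atom_sat A M)"

fun input_vars :: "'p mode \<Rightarrow> ('p, 'f) atom \<Rightarrow> nat set" where
  "input_vars M (Pred p ts) =
     {x. \<exists>i ms. i < length ts \<and> (p, ms) \<in> M \<and> length ms = length ts \<and> ms ! i
               \<and> x \<in> tvars (ts ! i)}"
| "input_vars M _ = {}"

definition local_var :: "nat \<Rightarrow> nat \<Rightarrow> ('p, 'f) clause \<Rightarrow> bool" where
  "local_var x i C \<longleftrightarrow> i < length (bd C) \<and> x \<in> avars (bd C ! i) \<and>
     x \<notin> avars (hd_atom C) \<and> (\<forall>j<length (bd C). j \<noteq> i \<longrightarrow> x \<notin> avars (bd C ! j))"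

definition clause_safe :: "('p, 'f) clause \<Rightarrow> 'p mode \<Rightarrow> bool" where
  "clause_safe C M \<longleftrightarrow>
     (\<forall>i<length (bd C). \<forall>t1 t2. bd C ! i = Neq t1 t2 \<longrightarrow>
        (\<forall>x \<in> tvars t1 \<union> tvars t2. x \<in> input_vars M (hd_atom C) \<or> local_var x i C))"

definition prog_safe :: "('p, 'f) clause set \<Rightarrow> 'p mode \<Rightarrow> bool" where
  "prog_safe P M \<longleftrightarrow> (\<forall>C\<in>P. clause_safe C M)"

end

theory Submission
  imports Defs "HOL-Library.Multiset"
begin


lemma tsubst_comp: "tsubst (tsubst t \<sigma>) \<tau> = tsubst t (\<lambda>x. tsubst (\<sigma> x) \<tau>)"
  by (induction t) auto
lemma tsubst_cong: "(\<And>x. x \<in> tvars t \<Longrightarrow> \<sigma> x = \<tau> x) \<Longrightarrow> tsubst t \<sigma> = tsubst t \<tau>"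
  by (induction t) auto
lemma tvars_tsubst: "tvars (tsubst t \<sigma>) = (\<Union>x\<in>tvars t. tvars (\<sigma> x))"
  by (induction t) auto
lemma tsubst_Var[simp]: "tsubst t Var = t"
  by (induction t) (auto simp: map_idI)
lemma finite_tvars[simp]: "finite (tvars t)"
  by (induction t) auto

lemma asubst_comp: "asubst (asubst A \<sigma>) \<tau> = asubst A (\<lambda>x. tsubst (\<sigma> x) \<tau>)"
  by (cases A) (auto simp: tsubst_comp)
lemma asubst_cong: "(\<And>x. x \<in> avars A \<Longrightarrow> \<sigma> x = \<tau> x) \<Longrightarrow> asubst A \<sigma> = asubst A \<tau>"
  by (cases A) (auto intro!: tsubst_cong)
lemma avars_asubst: "avars (asubst A \<sigma>) = (\<Union>x\<in>avars A. tvars (\<sigma> x))"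
  by (cases A) (auto simp: tvars_tsubst)
lemma asubst_Var[simp]: "asubst A Var = A"
  by (cases A) (auto simp: map_idI)
lemma finite_avars[simp]: "finite (avars A)"
  by (cases A) auto

lemma gvars_simps[simp]: "gvars [] = {}" "gvars (A # G) = avars A \<union> gvars G"
  "gvars (G @ G') = gvars G \<union> gvars G'"
  by (auto simp: gvars_def)
lemma gsubst_simps[simp]: "gsubst [] \<sigma> = []" "gsubst (A # G) \<sigma> = asubst A \<sigma> # gsubst G \<sigma>"
  "gsubst (G @ G') \<sigma> = gsubst G \<sigma> @ gsubst G' \<sigma>"
  by (auto simp: gsubst_def)
lemma gsubst_comp: "gsubst (gsubst G \<sigma>) \<tau> = gsubst G (\<lambda>x. tsubst (\<sigma> x) \<tau>)"
  by (induction G) (auto simp: asubst_comp)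
lemma gsubst_cong: "(\<And>x. x \<in> gvars G \<Longrightarrow> \<sigma> x = \<tau> x) \<Longrightarrow> gsubst G \<sigma> = gsubst G \<tau>"
  by (induction G) (auto intro!: asubst_cong)
lemma gvars_gsubst: "gvars (gsubst G \<sigma>) = (\<Union>x\<in>gvars G. tvars (\<sigma> x))"
  by (induction G) (auto simp: avars_asubst)
lemma gsubst_Var[simp]: "gsubst G Var = G"
  by (induction G) auto
lemma finite_gvars[simp]: "finite (gvars G)"
  by (induction G) auto
lemma gvars_set: "gvars G = (\<Union>A\<in>set G. avars A)" by (simp add: gvars_def)

lemma ground_tsubst: "ground t \<Longrightarrow> tsubst t \<sigma> = t"
  using tsubst_cong[of t \<sigma> Var] by (auto simp: ground_def)
lemma ground_tsubstD: "ground (tsubst t \<sigma>) \<Longrightarrow> x \<in> tvars t \<Longrightarrow> ground (\<sigma> x)"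
  by (auto simp: ground_def tvars_tsubst)

lemma mgu_fix: "is_mgu \<theta> E \<Longrightarrow> x \<notin> eqvars E \<Longrightarrow> \<theta> x = Var x"
  by (auto simp: is_mgu_def)
lemma mgu_vars: "is_mgu \<theta> E \<Longrightarrow> y \<in> tvars (\<theta> x) \<Longrightarrow> (\<theta> x = Var x \<and> y = x) \<or> y \<in> eqvars E"
  by (cases "\<theta> x = Var x") (auto simp: is_mgu_def)
lemma gvars_gsubst_mgu: "is_mgu \<theta> E \<Longrightarrow> z \<in> gvars (gsubst G \<theta>) \<Longrightarrow> z \<in> gvars G \<or> z \<in> eqvars E"
  unfolding gvars_gsubst using mgu_vars by fastforce
lemma avars_asubst_mgu: "is_mgu \<theta> E \<Longrightarrow> z \<in> avars (asubst A \<theta>) \<Longrightarrow> z \<in> avars A \<or> z \<in> eqvars E"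
  unfolding avars_asubst using mgu_vars by fastforce
lemma eqvars_single[simp]: "eqvars [(s, t)] = tvars s \<union> tvars t"
  by (simp add: eqvars_def)
lemma eqvars_atom_eqs: "atom_eqs A B = Some E \<Longrightarrow> eqvars E \<subseteq> avars A \<union> avars B"
  by (cases "(A, B)" rule: atom_eqs.cases)
     (auto simp: eqvars_def split: if_splits dest: set_zip_leftD set_zip_rightD)
lemma finite_eqvars: "finite (eqvars E)"
  by (auto simp: eqvars_def)

lemma hd_rename: "hd_atom (rename_clause \<rho> C) = asubst (hd_atom C) (\<lambda>x. Var (\<rho> x))"
  by (simp add: hd_atom_def rename_clause_def rename_term_def)
lemma bd_rename: "bd (rename_clause \<rho> C) = gsubst (bd C) (\<lambda>x. Var (\<rho> x))"
  by (simp add: bd_def rename_clause_def)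
lemma cvars_rename: "cvars (rename_clause \<rho> C) = \<rho> ` cvars C"
  by (auto simp: cvars_def hd_rename bd_rename avars_asubst gvars_gsubst)
lemma finite_cvars: "finite (cvars C)"
  by (simp add: cvars_def)

fun isnu :: "('p, 'f) atom \<Rightarrow> bool" where
  "isnu (Neq s t) = (\<not> (\<exists>\<tau>. tsubst s \<tau> = tsubst t \<tau>))"
| "isnu _ = False"

fun isneq :: "('p, 'f) atom \<Rightarrow> bool" where
  "isneq (Neq s t) = True"
| "isneq _ = False"

lemma isnu_subst: "isnu D \<Longrightarrow> isnu (asubst D \<theta>)"
  by (cases D) (auto simp: tsubst_comp)

lemma isneq_subst[simp]: "isneq (asubst D \<theta>) = isneq D"
  by (cases D) auto

lemma step_Nil: "\<not> step P [] G"
  by (auto elim: step.cases)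

lemma step_Neq: "step P (Neq s t # G) G' \<Longrightarrow> G' = G \<and> isnu (Neq s t :: ('p,'f) atom)"
  by (auto elim: step.cases)

lemma step_isnu: "isnu D \<Longrightarrow> step P (D # G) G"
  by (cases D) (auto intro: step.neq)

lemma steps_isnus: "\<forall>D\<in>set Ds. isnu D \<Longrightarrow> steps P (Ds @ G) G"
  unfolding steps_def
proof (induction Ds)
  case (Cons D Ds)
  then show ?case by (auto intro: converse_rtranclp_into_rtranclp step_isnu)
qed simp

lemma steps_trans: "steps P G G' \<Longrightarrow> steps P G' G'' \<Longrightarrow> steps P G G''"
  by (simp add: steps_def)

lemma steps_step: "step P G G' \<Longrightarrow> steps P G' G'' \<Longrightarrow> steps P G G''"
  by (simp add: steps_def converse_rtranclp_into_rtranclp)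

lemma steps_step2: "steps P G G' \<Longrightarrow> step P G' G'' \<Longrightarrow> steps P G G''"
  by (simp add: steps_def)

lemma step_shape:
  assumes "step P (a # W) W'"
  shows "\<exists>\<theta> B S. W' = gsubst (B @ W) \<theta> \<and> S \<inter> gvars (a # W) = {} \<and> gvars B \<subseteq> S \<and>
     (\<forall>x. \<theta> x = Var x \<or> (x \<in> avars a \<union> S \<and> tvars (\<theta> x) \<subseteq> avars a \<union> S))"
  using assms
proof cases
  case (eq \<theta> t1 t2)
  then show ?thesis
    by (rule_tac x=\<theta> in exI, rule_tac x="[]" in exI, rule_tac x="{}" in exI)
       (auto simp: is_mgu_def)
next
  case (neq t1 t2)
  then show ?thesis
    by (rule_tac x=Var in exI, rule_tac x="[]" in exI, rule_tac x="{}" in exI) auto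
next
  case (res C \<rho> C' E \<theta>)
  have "atom_eqs a (hd_atom C') = Some E" using res by simp
  then have ev: "eqvars E \<subseteq> avars a \<union> cvars C'"
    using eqvars_atom_eqs by (fastforce simp: cvars_def)
  show ?thesis
    apply (rule_tac x=\<theta> in exI, rule_tac x="bd C'" in exI, rule_tac x="cvars C'" in exI)
    using res ev by (simp add: is_mgu_def cvars_def) blast
qed




inductive rs :: "(('p,'f) atom \<Rightarrow> bool) \<Rightarrow> (('p,'f) atom \<Rightarrow> ('p,'f) goal \<Rightarrow> bool)
   \<Rightarrow> ('p,'f) goal \<Rightarrow> ('p,'f) goal \<Rightarrow> bool" for Q R where
  rs_nil: "rs Q R [] []"
| rs_com: "rs Q R xs ys \<Longrightarrow> rs Q R (a # xs) (a # ys)"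
| rs_one: "rs Q R xs ys \<Longrightarrow> isnu D \<Longrightarrow> Q D \<Longrightarrow> rs Q R (D # xs) ys"
| rs_two: "rs Q R xs ys \<Longrightarrow> isnu D \<Longrightarrow> R D xs \<Longrightarrow> rs Q R xs (D # ys)"

inductive r0 :: "(('p,'f) atom \<Rightarrow> bool) \<Rightarrow> ('p,'f) goal \<Rightarrow> ('p,'f) goal \<Rightarrow> bool" for Q where
  r0_nil: "r0 Q [] []"
| r0_com: "r0 Q xs ys \<Longrightarrow> r0 Q (a # xs) (a # ys)"
| r0_one: "r0 Q xs ys \<Longrightarrow> Q D \<Longrightarrow> r0 Q (D # xs) ys"
| r0_two: "r0 Q xs ys \<Longrightarrow> r0 Q xs (D # ys)"

lemma rs_refl: "rs Q R xs xs"
  by (induction xs) (auto intro: rs.intros)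

lemma rs_prefix: "rs Q R xs ys \<Longrightarrow> rs Q R (ps @ xs) (ps @ ys)"
  by (induction ps) (auto intro: rs.intros)

lemma r0_prefix: "r0 Q xs ys \<Longrightarrow> r0 Q (ps @ xs) (ps @ ys)"
  by (induction ps) (auto intro: r0.intros)

lemma rs_app: "rs Q R xs ys \<Longrightarrow> rs Q R xs' ys' \<Longrightarrow> (\<And>D a b. R D a \<Longrightarrow> R D (a @ b))
  \<Longrightarrow> rs Q R (xs @ xs') (ys @ ys')"
  by (induction rule: rs.induct) (auto intro: rs.intros)

lemma r0_app: "r0 Q xs ys \<Longrightarrow> r0 Q xs' ys' \<Longrightarrow> r0 Q (xs @ xs') (ys @ ys')"
  by (induction rule: r0.induct) (auto intro: r0.intros)

lemma rs_r0: "rs Q R xs ys \<Longrightarrow> r0 Q xs ys"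
  by (induction rule: rs.induct) (auto intro: r0.intros)

lemma rs_subst: "rs Q R xs ys \<Longrightarrow> (\<And>D. Q D \<Longrightarrow> isnu D \<Longrightarrow> Q (asubst D \<theta>))
  \<Longrightarrow> (\<And>D xs. R D xs \<Longrightarrow> R (asubst D \<theta>) (gsubst xs \<theta>))
  \<Longrightarrow> rs Q R (gsubst xs \<theta>) (gsubst ys \<theta>)"
  by (induction rule: rs.induct) (auto intro: rs.intros isnu_subst)

lemma r0_subst: "r0 Q xs ys \<Longrightarrow> (\<And>D. Q D \<Longrightarrow> Q (asubst D \<theta>))
  \<Longrightarrow> r0 Q (gsubst xs \<theta>) (gsubst ys \<theta>)"
  by (induction rule: r0.induct) (auto intro: r0.intros)

lemma rs_inv2: "rs Q R X Y \<Longrightarrow> Y = a # Yr \<Longrightarrow> \<exists>Ds X'. X = Ds @ X' \<and> (\<forall>D\<in>set Ds. isnu D \<and> Q D) \<and>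
   ((\<exists>Xr. X' = a # Xr \<and> rs Q R Xr Yr) \<or> (isnu a \<and> rs Q R X' Yr))"
proof (induction arbitrary: a Yr rule: rs.induct)
  case (rs_com xs ys b)
  then show ?case by (rule_tac x="[]" in exI) auto
next
  case (rs_one xs ys D)
  from rs_one.IH[OF rs_one.prems] obtain Ds X' where
    "xs = Ds @ X'" "\<forall>D\<in>set Ds. isnu D \<and> Q D"
    "(\<exists>Xr. X' = a # Xr \<and> rs Q R Xr Yr) \<or> (isnu a \<and> rs Q R X' Yr)" by blast
  then show ?case using rs_one by (rule_tac x="D # Ds" in exI) auto
next
  case (rs_two xs ys D)
  then show ?case by (rule_tac x="[]" in exI) auto
qed simp

lemma rs_inv1: "rs Q R X Y \<Longrightarrow> X = a # Xr \<Longrightarrow> \<exists>Ds Y'. Y = Ds @ Y' \<and> (\<forall>D\<in>set Ds. isnu D) \<and>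
   ((\<exists>Yr. Y' = a # Yr \<and> rs Q R Xr Yr) \<or> (isnu a \<and> Q a \<and> rs Q R Xr Y'))"
proof (induction arbitrary: a Xr rule: rs.induct)
  case (rs_com xs ys b)
  then show ?case by (rule_tac x="[]" in exI) auto
next
  case (rs_two xs ys D)
  from rs_two.IH[OF rs_two.prems] obtain Ds Y' where
    "ys = Ds @ Y'" "\<forall>D\<in>set Ds. isnu D"
    "(\<exists>Yr. Y' = a # Yr \<and> rs Q R Xr Yr) \<or> (isnu a \<and> Q a \<and> rs Q R Xr Y')" by blast
  then show ?case using rs_two by (rule_tac x="D # Ds" in exI) auto
next
  case (rs_one xs ys D)
  then show ?case by (rule_tac x="[]" in exI) auto
qed simp

lemma rs_Nil2: "rs Q R X Y \<Longrightarrow> Y = [] \<Longrightarrow> \<forall>D\<in>set X. isnu D"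
  by (induction rule: rs.induct) auto

lemma rs_Nil1: "rs Q R X Y \<Longrightarrow> X = [] \<Longrightarrow> \<forall>D\<in>set Y. isnu D"
  by (induction rule: rs.induct) auto

lemma r0_vars: "r0 (\<lambda>D. avars D \<inter> V = {}) X Y \<Longrightarrow> gvars X \<inter> V \<subseteq> gvars Y"
  by (induction rule: r0.induct) auto

lemma rs_vars: "rs Q (\<lambda>D xs. avars D \<subseteq> gvars xs) X Y \<Longrightarrow> gvars Y \<subseteq> gvars X"
  by (induction rule: rs.induct) auto




lemma shape_fix: "(\<forall>x. \<theta> x = Var x \<or> (x \<in> T \<and> tvars (\<theta> x) \<subseteq> T)) \<Longrightarrow> avars D \<inter> T = {}
  \<Longrightarrow> asubst D \<theta> = D"
  using asubst_cong[of D \<theta> Var] by auto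

lemma shape_vars: "(\<forall>x. \<theta> x = Var x \<or> (x \<in> T \<and> tvars (\<theta> x) \<subseteq> T))
  \<Longrightarrow> gvars (gsubst Z \<theta>) \<subseteq> gvars Z \<union> T"
proof
  fix z assume a: "\<forall>x. \<theta> x = Var x \<or> (x \<in> T \<and> tvars (\<theta> x) \<subseteq> T)"
    and "z \<in> gvars (gsubst Z \<theta>)"
  then obtain y where y: "y \<in> gvars Z" "z \<in> tvars (\<theta> y)" unfolding gvars_gsubst by blast
  show "z \<in> gvars Z \<union> T" using a[rule_format, of y] y by auto
qed

lemma lookahead_aux: "(step P)\<^sup>*\<^sup>* G G' \<Longrightarrow> G' = [] \<Longrightarrow> G = X @ D # Y \<Longrightarrow> isneq D
  \<Longrightarrow> avars D \<inter> (gvars X \<union> gvars Y) = {} \<Longrightarrow> isnu D"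
proof (induction arbitrary: X Y rule: converse_rtranclp_induct)
  case base
  then show ?case by simp
next
  case (step G G1)
  show ?case
  proof (cases X)
    case Nil
    with step obtain s t where "D = Neq s t" "step P (Neq s t # Y) G1"
      by (cases D) auto
    then show ?thesis using step_Neq by blast
  next
    case (Cons a X')
    with step have "step P (a # (X' @ D # Y)) G1" by simp
    from step_shape[OF this] obtain \<theta> B S where
      sh: "G1 = gsubst (B @ X' @ D # Y) \<theta>" "S \<inter> gvars (a # (X' @ D # Y)) = {}" "gvars B \<subseteq> S"
        "\<forall>x. \<theta> x = Var x \<or> (x \<in> avars a \<union> S \<and> tvars (\<theta> x) \<subseteq> avars a \<union> S)" by blast
    have dis: "avars D \<inter> (avars a \<union> S) = {}" using sh(2) step.prems Cons by auto
    have fx: "asubst D \<theta> = D" by (rule shape_fix[OF sh(4) dis])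
    have G1: "G1 = gsubst (B @ X') \<theta> @ D # gsubst Y \<theta>" using sh(1) fx by simp
    have v1: "gvars (gsubst (B @ X') \<theta>) \<subseteq> gvars (B @ X') \<union> (avars a \<union> S)"
      by (rule shape_vars[OF sh(4)])
    have v2: "gvars (gsubst Y \<theta>) \<subseteq> gvars Y \<union> (avars a \<union> S)"
      by (rule shape_vars[OF sh(4)])
    have "avars D \<inter> (gvars (gsubst (B @ X') \<theta>) \<union> gvars (gsubst Y \<theta>)) = {}"
      using v1 v2 dis sh(3) step.prems Cons by (simp only: gvars_simps) blast
    then show ?thesis using step.IH[OF step.prems(1) G1 step.prems(3)] by simp
  qed
qed

lemma lookahead: "steps P (X @ D # Y) [] \<Longrightarrow> isneq D
  \<Longrightarrow> avars D \<inter> (gvars X \<union> gvars Y) = {} \<Longrightarrow> isnu D"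
  unfolding steps_def using lookahead_aux by blast

inductive stepV :: "('p, 'f) clause set \<Rightarrow> nat set \<Rightarrow> ('p, 'f) goal \<Rightarrow> ('p, 'f) goal \<Rightarrow> bool"
  for P V where
  eqV: "is_mgu \<theta> [(t1, t2)] \<Longrightarrow> gvars (Eq t1 t2 # G) \<subseteq> V \<Longrightarrow> stepV P V (Eq t1 t2 # G) (gsubst G \<theta>)"
| neqV: "\<not> (\<exists>\<tau>. tsubst t1 \<tau> = tsubst t2 \<tau>) \<Longrightarrow> gvars (Neq t1 t2 # G) \<subseteq> V \<Longrightarrow> stepV P V (Neq t1 t2 # G) G"
| resV: "\<lbrakk> nonbasic A; C \<in> P; inj \<rho>; C' = rename_clause \<rho> C;
          cvars C' \<inter> gvars (A # G) = {};
          atom_eqs A (hd_atom C') = Some E; is_mgu \<theta> E; gvars (A # G) \<subseteq> V; cvars C' \<subseteq> V \<rbrakk>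
        \<Longrightarrow> stepV P V (A # G) (gsubst (bd C' @ G) \<theta>)"

lemma stepV_step: "stepV P V G G' \<Longrightarrow> step P G G'"
  by (induction rule: stepV.induct) (blast intro: step.intros)+

lemma stepV_mono: "stepV P V G G' \<Longrightarrow> V \<subseteq> V' \<Longrightarrow> stepV P V' G G'"
  by (induction rule: stepV.induct) (blast intro: stepV.intros)+

lemma step_stepV: "step P G G' \<Longrightarrow> \<exists>V. finite V \<and> stepV P V G G'"
proof (induction rule: step.induct)
  case (eq \<theta> t1 t2 G)
  then show ?case by (intro exI[of _ "gvars (Eq t1 t2 # G)"]) (auto intro: stepV.intros)
next
  case (neq t1 t2 G)
  then show ?case by (intro exI[of _ "gvars (Neq t1 t2 # G)"]) (auto intro: stepV.intros)
next
  case (res A C \<rho> C' G E \<theta>)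
  then have "stepV P (gvars (A # G) \<union> cvars C') (A # G) (gsubst (bd C' @ G) \<theta>)"
    by (intro stepV.resV) auto
  moreover have "finite (gvars (A # G) \<union> cvars C')" using finite_cvars[of C'] finite_gvars[of "A # G"]
    by blast
  ultimately show ?case by blast
qed

lemma steps_stepsV: "steps P G G' \<Longrightarrow> \<exists>V. finite V \<and> (stepV P V)\<^sup>*\<^sup>* G G'"
  unfolding steps_def
proof (induction rule: rtranclp_induct)
  case base
  then show ?case by auto
next
  case (step G1 G2)
  then obtain V where V: "finite V" "(stepV P V)\<^sup>*\<^sup>* G G1" by blast
  obtain V' where V': "finite V'" "stepV P V' G1 G2" using step_stepV[OF step(2)] by blast
  have "(stepV P (V \<union> V'))\<^sup>*\<^sup>* G G1"
    using V(2) by (rule rtranclp_mono[THEN predicate2D, rotated]) (auto intro: stepV_mono)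
  moreover have "stepV P (V \<union> V') G1 G2" using V'(2) stepV_mono by blast
  ultimately show ?case using V(1) V'(1) by (intro exI[of _ "V \<union> V'"]) auto
qed




lemma nu_transfer:
  assumes "inj f" and "\<And>x. x \<in> avars D \<Longrightarrow> (\<alpha> x = \<beta> x \<and> ground (\<alpha> x)) \<or> (\<alpha> x = Var (f x) \<and> \<beta> x = Var (g x))"
    and "isnu (asubst D \<alpha>)"
  shows "isnu (asubst D \<beta>)"
proof (cases D)
  case (Neq s t)
  show ?thesis
  proof (rule ccontr)
    assume "\<not> isnu (asubst D \<beta>)"
    then obtain \<tau> where \<tau>: "tsubst (tsubst s \<beta>) \<tau> = tsubst (tsubst t \<beta>) \<tau>" using Neq by auto
    define \<tau>' where "\<tau>' = (\<lambda>y. \<tau> (g (inv f y)))"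
    have eq: "tsubst (\<alpha> x) \<tau>' = tsubst (\<beta> x) \<tau>" if "x \<in> avars D" for x
      using assms(2)[OF that] by (auto simp: ground_tsubst \<tau>'_def inv_f_f[OF assms(1)])
    have "tsubst (tsubst s \<alpha>) \<tau>' = tsubst (tsubst s \<beta>) \<tau>"
      unfolding tsubst_comp using eq Neq by (auto intro!: tsubst_cong)
    moreover have "tsubst (tsubst t \<alpha>) \<tau>' = tsubst (tsubst t \<beta>) \<tau>"
      unfolding tsubst_comp using eq Neq by (auto intro!: tsubst_cong)
    ultimately have "tsubst (tsubst s \<alpha>) \<tau>' = tsubst (tsubst t \<alpha>) \<tau>'" using \<tau> by simp
    then show False using assms(3) Neq by auto
  qed
qed (use assms in auto)

lemma Rv_subst: "avars D \<subseteq> gvars xs \<Longrightarrow> avars (asubst D \<theta>) \<subseteq> gvars (gsubst xs \<theta>)"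
  by (auto simp: avars_asubst gvars_gsubst)

lemma mem_other_idx:
  assumes "b \<in> set (ys @ zs)"
  shows "\<exists>j < length (ys @ [d] @ zs). j \<noteq> length ys \<and> (ys @ [d] @ zs) ! j = b"
proof -
  from assms consider "b \<in> set ys" | "b \<in> set zs" by auto
  then show ?thesis
  proof cases
    case 1
    then obtain j where "j < length ys" "ys ! j = b" by (auto simp: in_set_conv_nth)
    then show ?thesis by (intro exI[of _ j]) (auto simp: nth_append)
  next
    case 2
    then obtain j where "j < length zs" "zs ! j = b" by (auto simp: in_set_conv_nth)
    then show ?thesis by (intro exI[of _ "length ys + 1 + j"]) (auto simp: nth_append)
  qed
qed

locale setting =
  fixes P1 P2 :: "('p, 'f) clause set" and M :: "'p mode"
    and H :: "'p \<times> 'f term list" and G1 G2 G3 :: "('p, 'f) goal"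
    and t1 t2 :: "'f term"
  assumes mode: "mode_for_program M P1"
    and safe: "prog_safe P1 M"
    and sat: "prog_sat P1 M"
    and C1in: "(H, G1 @ G2 @ [Neq t1 t2] @ G3) \<in> P1"
    and P2def: "P2 = (P1 - {(H, G1 @ G2 @ [Neq t1 t2] @ G3)}) \<union> {(H, G1 @ [Neq t1 t2] @ G2 @ G3)}"
begin

definition "C1 = (H, G1 @ G2 @ [Neq t1 t2] @ G3)"
definition "C2 = (H, G1 @ [Neq t1 t2] @ G2 @ G3)"
definition "Dn = (Neq t1 t2 :: ('p, 'f) atom)"
definition "hdA = (Pred (fst H) (snd H) :: ('p, 'f) atom)"
definition "Lset = avars Dn - input_vars M hdA"
definition "K = avars hdA \<union> gvars (G1 @ G2 @ G3)"

lemma C1inP1: "C1 \<in> P1" using C1in by (simp add: C1_def)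
lemma C2inP2: "C2 \<in> P2" using P2def by (simp add: C2_def)
lemma P2_cases: "C \<in> P2 \<Longrightarrow> C = C2 \<or> (C \<in> P1 \<and> C \<noteq> C1)"
  using P2def by (auto simp: C1_def C2_def)
lemma P1_cases: "C \<in> P1 \<Longrightarrow> C = C1 \<or> C \<in> P2"
  using P2def by (auto simp: C1_def C2_def)

lemma hd_C: "hd_atom C1 = hdA" "hd_atom C2 = hdA"
  by (simp_all add: hd_atom_def C1_def C2_def hdA_def)
lemma bd_C: "bd C1 = G1 @ G2 @ [Dn] @ G3" "bd C2 = G1 @ [Dn] @ G2 @ G3"
  by (simp_all add: bd_def C1_def C2_def Dn_def)
lemma cvars_C: "cvars C1 = K \<union> avars Dn" "cvars C2 = K \<union> avars Dn"
  by (auto simp: cvars_def hd_C bd_C K_def)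

lemma input_sub: "input_vars M hdA \<subseteq> avars hdA"
  by (auto simp: hdA_def) (metis nth_mem)

lemma Lset_K: "Lset \<inter> K = {}"
proof -
  have cs: "clause_safe C1 M" using safe C1inP1 by (auto simp: prog_safe_def)
  let ?i = "length (G1 @ G2)"
  have bdi: "bd C1 ! ?i = Neq t1 t2" "?i < length (bd C1)"
    by (simp_all add: bd_C Dn_def nth_append)
  show ?thesis
  proof (rule ccontr)
    assume "Lset \<inter> K \<noteq> {}"
    then obtain x where x: "x \<in> Lset" "x \<in> K" by blast
    then have "x \<in> tvars t1 \<union> tvars t2" "x \<notin> input_vars M hdA" by (auto simp: Lset_def Dn_def)
    with cs bdi have loc: "local_var x ?i C1" unfolding clause_safe_def hd_C by blast
    show False
    proof (cases "x \<in> avars hdA")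
      case True
      then show ?thesis using loc by (simp add: local_var_def hd_C)
    next
      case False
      then have "x \<in> gvars ((G1 @ G2) @ G3)" using x(2) by (simp add: K_def)
      then obtain b where b: "b \<in> set ((G1 @ G2) @ G3)" "x \<in> avars b" by (auto simp: gvars_set)
      from mem_other_idx[OF b(1), of Dn] obtain j where
        "j < length ((G1 @ G2) @ [Dn] @ G3)" "j \<noteq> ?i" "((G1 @ G2) @ [Dn] @ G3) ! j = b" by auto
      then show ?thesis using loc b(2) by (auto simp: local_var_def bd_C)
    qed
  qed
qed

lemma notL_input: "x \<in> avars Dn \<Longrightarrow> x \<notin> Lset \<Longrightarrow> x \<in> input_vars M hdA"
  by (simp add: Lset_def)

lemma ground_inst:
  assumes "atom_sat a M" "atom_eqs a (asubst hdA (\<lambda>x. Var (\<rho> x))) = Some E" "is_mgu \<theta> E"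
    "x \<in> input_vars M hdA"
  shows "ground (\<theta> (\<rho> x))"
proof -
  define p where "p = fst H"
  define ts where "ts = snd H"
  have H: "hdA = Pred p ts" by (simp add: hdA_def p_def ts_def)
  from assms(4) obtain i ms where i: "i < length ts" "(p, ms) \<in> M" "length ms = length ts" "ms ! i"
    "x \<in> tvars (ts ! i)" by (auto simp: H)
  from assms(2) obtain ss where a: "a = Pred p ss" "length ss = length ts"
    "E = zip ss (map (\<lambda>t. tsubst t (\<lambda>x. Var (\<rho> x))) ts)"
    by (cases "(a, asubst hdA (\<lambda>x. Var (\<rho> x)))" rule: atom_eqs.cases)
       (auto simp: H split: if_splits)
  from assms(1) obtain ms' where ms': "(p, ms') \<in> M" "length ms' = length ss"
    "\<forall>i<length ss. ms' ! i \<longrightarrow> ground (ss ! i)" by (auto simp: a)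
  have "(p, length ts) \<in> preds_prog P1"
    using C1inP1 by (force simp: preds_prog_def preds_goal_def hd_C(1) H)
  then have "\<exists>!ms. (p, ms) \<in> M \<and> length ms = length ts" using mode by (auto simp: mode_for_program_def)
  then have "ms' = ms" using ms' i a by auto
  then have gi: "ground (ss ! i)" using ms' i a by auto
  have "(ss ! i, tsubst (ts ! i) (\<lambda>x. Var (\<rho> x))) \<in> set E"
    using i a by (auto simp: in_set_zip intro!: exI[of _ i])
  then have "tsubst (ss ! i) \<theta> = tsubst (tsubst (ts ! i) (\<lambda>x. Var (\<rho> x))) \<theta>"
    using assms(3) by (auto simp: is_mgu_def unifies_def)
  then have "ground (tsubst (ts ! i) (\<lambda>x. \<theta> (\<rho> x)))"
    using gi by (simp add: ground_tsubst tsubst_comp)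
  then show ?thesis using ground_tsubstD i(5) by fastforce
qed

end



context setting begin

lemma Lset_sub: "Lset \<subseteq> avars Dn" by (auto simp: Lset_def)

lemma resD:
  assumes as: "atom_sat a M" and inj: "inj \<rho>"
    and ae: "atom_eqs a (asubst hdA (\<lambda>x. Var (\<rho> x))) = Some E" and mg: "is_mgu \<theta> E"
    and fr: "\<rho> ` (K \<union> avars Dn) \<inter> gvars (a # W) = {}"
  shows "\<forall>x\<in>avars Dn. (x \<in> Lset \<and> \<theta> (\<rho> x) = Var (\<rho> x)) \<or> (x \<notin> Lset \<and> ground (\<theta> (\<rho> x)))"
    and "avars (asubst Dn (\<lambda>x. \<theta> (\<rho> x))) \<subseteq> \<rho> ` Lset"
    and "avars (asubst Dn (\<lambda>x. \<theta> (\<rho> x))) \<inter>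
          (gvars (gsubst (gsubst (G1 @ G2 @ G3) (\<lambda>x. Var (\<rho> x))) \<theta>) \<union> gvars (gsubst W \<theta>)) = {}"
proof -
  have ev: "eqvars E \<subseteq> avars a \<union> \<rho> ` avars hdA"
    using eqvars_atom_eqs[OF ae] by (auto simp: avars_asubst)
  have notE: "\<rho> x \<notin> eqvars E" if "x \<in> Lset" for x
  proof
    assume "\<rho> x \<in> eqvars E"
    then consider "\<rho> x \<in> avars a" | "\<rho> x \<in> \<rho> ` avars hdA" using ev by blast
    then show False
    proof cases
      case 1 then show ?thesis using fr that Lset_sub by auto
    next
      case 2 then have "x \<in> avars hdA" using inj by (auto dest: injD)
      then show ?thesis using that Lset_K by (auto simp: K_def)
    qed
  qed
  show A: "\<forall>x\<in>avars Dn. (x \<in> Lset \<and> \<theta> (\<rho> x) = Var (\<rho> x)) \<or> (x \<notin> Lset \<and> ground (\<theta> (\<rho> x)))"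
  proof
    fix x assume x: "x \<in> avars Dn"
    show "(x \<in> Lset \<and> \<theta> (\<rho> x) = Var (\<rho> x)) \<or> (x \<notin> Lset \<and> ground (\<theta> (\<rho> x)))"
    proof (cases "x \<in> Lset")
      case True then show ?thesis using notE mgu_fix[OF mg] by auto
    next
      case False then show ?thesis using ground_inst[OF as ae mg] notL_input x by auto
    qed
  qed
  show B: "avars (asubst Dn (\<lambda>x. \<theta> (\<rho> x))) \<subseteq> \<rho> ` Lset"
  proof
    fix z assume "z \<in> avars (asubst Dn (\<lambda>x. \<theta> (\<rho> x)))"
    then obtain x where x: "x \<in> avars Dn" "z \<in> tvars (\<theta> (\<rho> x))" by (auto simp: avars_asubst)
    then show "z \<in> \<rho> ` Lset" using A by (auto simp: ground_def)
  qed
  show "avars (asubst Dn (\<lambda>x. \<theta> (\<rho> x))) \<inter>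
          (gvars (gsubst (gsubst (G1 @ G2 @ G3) (\<lambda>x. Var (\<rho> x))) \<theta>) \<union> gvars (gsubst W \<theta>)) = {}"
  proof (rule ccontr)
    assume "\<not> ?thesis"
    then obtain l where l: "l \<in> Lset"
      "\<rho> l \<in> gvars (gsubst (gsubst (G1 @ G2 @ G3) (\<lambda>x. Var (\<rho> x))) \<theta>) \<union> gvars (gsubst W \<theta>)"
      using B by blast
    have "\<rho> l \<notin> eqvars E" using notE l(1) by blast
    then have "\<rho> l \<in> gvars (gsubst (G1 @ G2 @ G3) (\<lambda>x. Var (\<rho> x))) \<or> \<rho> l \<in> gvars W"
      using l(2) gvars_gsubst_mgu[OF mg] by blast
    then show False
    proof
      assume "\<rho> l \<in> gvars (gsubst (G1 @ G2 @ G3) (\<lambda>x. Var (\<rho> x)))"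
      then have "l \<in> gvars (G1 @ G2 @ G3)"
        unfolding gvars_gsubst using inj by (auto dest: injD)
      then show False using l(1) Lset_K by (auto simp: K_def)
    next
      assume "\<rho> l \<in> gvars W"
      then show False using fr l(1) Lset_sub by auto
    qed
  qed
qed

lemma hd_ren: "hd_atom (rename_clause \<rho> C1) = asubst hdA (\<lambda>x. Var (\<rho> x))"
  "hd_atom (rename_clause \<rho> C2) = asubst hdA (\<lambda>x. Var (\<rho> x))"
  by (simp_all add: hd_rename hd_C)

lemma cvars_ren: "cvars (rename_clause \<rho> C1) = \<rho> ` (K \<union> avars Dn)"
  "cvars (rename_clause \<rho> C2) = \<rho> ` (K \<union> avars Dn)"
  by (simp_all add: cvars_rename cvars_C)

lemma bd_ren: "bd (rename_clause \<rho> C1) = gsubst G1 (\<lambda>x. Var (\<rho> x)) @ gsubst G2 (\<lambda>x. Var (\<rho> x))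
     @ [asubst Dn (\<lambda>x. Var (\<rho> x))] @ gsubst G3 (\<lambda>x. Var (\<rho> x))"
  "bd (rename_clause \<rho> C2) = gsubst G1 (\<lambda>x. Var (\<rho> x)) @ [asubst Dn (\<lambda>x. Var (\<rho> x))] @
     gsubst G2 (\<lambda>x. Var (\<rho> x)) @ gsubst G3 (\<lambda>x. Var (\<rho> x))"
  by (simp_all add: bd_rename bd_C)

lemma Dsub: "asubst (asubst Dn (\<lambda>x. Var (\<rho> x))) \<theta> = asubst Dn (\<lambda>x. \<theta> (\<rho> x))"
  by (simp add: asubst_comp)

lemma isneq_Dn: "isneq (asubst Dn \<sigma>)" "isneq Dn" by (simp_all add: Dn_def)

abbreviation "Rv \<equiv> (\<lambda>(D :: ('p,'f) atom) xs. avars D \<subseteq> gvars xs)"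

lemma sim12_aux:
  assumes "(step P1)\<^sup>*\<^sup>* X X'" "X' = []" "nonbasic A0" "atom_sat A0 M" "steps P1 [A0] X"
    "rs (\<lambda>_. True) Rv X Y"
  shows "steps P2 Y []"
  using assms
proof (induction arbitrary: Y rule: converse_rtranclp_induct)
  case base
  then show ?case using rs_Nil1[OF base(5)] steps_isnus[of Y P2 "[]"] by simp
next
  case (step X X1)
  obtain a Xr where X: "X = a # Xr" using step.hyps(1) step_Nil by (cases X) auto
  have sX1: "steps P1 [A0] X1" using steps_step2[OF step.prems(4) step.hyps(1)] .
  from rs_inv1[OF step.prems(5) X] obtain Ds Y' where Y: "Y = Ds @ Y'" "\<forall>D\<in>set Ds. isnu D"
    "(\<exists>Yr. Y' = a # Yr \<and> rs (\<lambda>_. True) Rv Xr Yr) \<or> (isnu a \<and> rs (\<lambda>_. True) Rv Xr Y')" by blast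
  have sY: "steps P2 Y Y'" using Y steps_isnus by blast
  from Y(3) show ?case
  proof
    assume "isnu a \<and> rs (\<lambda>_. True) Rv Xr Y'"
    then have a: "isnu a" and r: "rs (\<lambda>_. True) Rv Xr Y'" by auto
    then obtain s t where "a = Neq s t" by (cases a) auto
    then have "X1 = Xr" using step.hyps(1) X step_Neq by blast
    then show ?thesis using step.IH[OF step.prems(1-3) sX1] r sY steps_trans by blast
  next
    assume "\<exists>Yr. Y' = a # Yr \<and> rs (\<lambda>_. True) Rv Xr Yr"
    then obtain Yr where Y': "Y' = a # Yr" and r: "rs (\<lambda>_. True) Rv Xr Yr" by blast
    have rsub: "rs (\<lambda>_. True) Rv (gsubst Xr \<theta>) (gsubst Yr \<theta>)" for \<theta>
      using rs_subst[OF r] Rv_subst by blast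
    have vY: "gvars Yr \<subseteq> gvars Xr" using rs_vars[OF r] .
    from step.hyps(1)[unfolded X] show ?thesis
    proof cases
      case (eq \<theta> u1 u2)
      then have "step P2 Y' (gsubst Yr \<theta>)" using Y' by (auto intro: step.eq)
      then show ?thesis using step.IH[OF step.prems(1-3) sX1] rsub eq steps_trans[OF sY steps_step]
        by blast
    next
      case (neq u1 u2)
      then have "step P2 Y' Yr" using Y' by (auto intro: step.neq)
      then show ?thesis using step.IH[OF step.prems(1-3) sX1] r neq steps_trans[OF sY steps_step]
        by blast
    next
      case (res C \<rho> C' E \<theta>)
      show ?thesis
      proof (cases "C = C1")
        case False
        then have CP2: "C \<in> P2" using P1_cases res by blast
        have fr: "cvars C' \<inter> gvars (a # Yr) = {}" using res vY by auto
        have "step P2 Y' (gsubst (bd C' @ Yr) \<theta>)" unfolding Y'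
          by (rule step.res[OF res(2) CP2 res(4) res(5) fr res(7) res(8)])
        moreover have "rs (\<lambda>_. True) Rv X1 (gsubst (bd C' @ Yr) \<theta>)"
          using res(1) rs_prefix[OF rsub[of \<theta>], of "gsubst (bd C') \<theta>"] by simp
        ultimately show ?thesis using step.IH[OF step.prems(1-3) sX1] steps_trans[OF sY steps_step]
          by blast
      next
        case True
        define r where "r = (\<lambda>x. Var (\<rho> x) :: 'f term)"
        define D' where "D' = asubst Dn (\<lambda>x. \<theta> (\<rho> x))"
        have "steps P1 [A0] (a # Xr)" using step.prems(4) X by simp
        then have as: "atom_sat a M"
          using sat[unfolded prog_sat_def, rule_format, OF step.prems(2) step.prems(3)] res(2) by blast
        have ae: "atom_eqs a (asubst hdA r) = Some E" using res True hd_ren by (simp add: r_def)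
        have frX: "\<rho> ` (K \<union> avars Dn) \<inter> gvars (a # Xr) = {}" using res True cvars_ren by simp
        note R = resD[OF as res(4) ae[unfolded r_def] res(8) frX]
        define g1 where "g1 = gsubst (gsubst G1 r) \<theta>"
        define g2 where "g2 = gsubst (gsubst G2 r) \<theta>"
        define g3 where "g3 = gsubst (gsubst G3 r) \<theta>"
        have X1: "X1 = g1 @ g2 @ D' # g3 @ gsubst Xr \<theta>"
          using res True by (simp add: bd_ren g1_def g2_def g3_def D'_def Dsub r_def)
        have priv: "avars D' \<inter> (gvars (g1 @ g2) \<union> gvars (g3 @ gsubst Xr \<theta>)) = {}"
          using R(3) by (auto simp: g1_def g2_def g3_def D'_def r_def)
        have "steps P1 ((g1 @ g2) @ D' # (g3 @ gsubst Xr \<theta>)) []"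
          using step.hyps(2) step.prems(1) X1 by (simp add: steps_def)
        moreover have "isneq D'" by (simp add: D'_def isneq_Dn)
        ultimately have nu: "isnu D'" using lookahead priv by blast
        have fr: "cvars (rename_clause \<rho> C2) \<inter> gvars (a # Yr) = {}"
          using frX vY cvars_ren by auto
        have "step P2 Y' (gsubst (bd (rename_clause \<rho> C2) @ Yr) \<theta>)" unfolding Y'
          by (rule step.res[OF res(2) C2inP2 res(4) refl fr _ res(8)])
             (use ae hd_ren in \<open>simp add: r_def\<close>)
        moreover have "gsubst (bd (rename_clause \<rho> C2) @ Yr) \<theta> = g1 @ D' # g2 @ g3 @ gsubst Yr \<theta>"
          by (simp add: bd_ren g1_def g2_def g3_def D'_def Dsub r_def)
        moreover have "rs (\<lambda>_. True) Rv X1 (g1 @ D' # g2 @ g3 @ gsubst Yr \<theta>)"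
          unfolding X1
          apply (rule rs_prefix)
          apply (rule rs_two[OF _ nu])
           apply (rule rs_prefix)
           apply (rule rs_one[OF _ nu])
            apply (rule rs_prefix)
            apply (rule rsub)
           apply simp
          apply auto
          done
        ultimately show ?thesis using step.IH[OF step.prems(1-3) sX1] steps_trans[OF sY steps_step]
          by simp
      qed
    qed
  qed
qed

lemma sim12: "nonbasic A \<Longrightarrow> atom_sat A M \<Longrightarrow> succeeds [A] P1 \<Longrightarrow> succeeds [A] P2"
  unfolding succeeds_def
  using sim12_aux[of "[A]" "[]" A "[A]"] rs_refl by (auto simp: steps_def)

end



lemma fresh_ren:
  assumes "inj (\<rho> :: nat \<Rightarrow> nat)" "finite K" "finite X"
  shows "\<exists>\<rho>1. inj \<rho>1 \<and> (\<forall>x\<in>K. \<rho>1 x = \<rho> x) \<and> (\<forall>x. x \<notin> K \<longrightarrow> \<rho>1 x \<notin> X)"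
proof -
  have fin: "finite (\<rho> ` K \<union> X)" using assms(2,3) by blast
  have "infinite (UNIV - (\<rho> ` K \<union> X))"
    by (rule Diff_infinite_finite[OF fin infinite_UNIV_nat])
  then obtain e :: "nat \<Rightarrow> nat" where e: "inj e" "range e \<subseteq> UNIV - (\<rho> ` K \<union> X)"
    using infinite_iff_countable_subset[of "UNIV - (\<rho> ` K \<union> X)"] by (elim iffD1[THEN exE]) auto
  define \<rho>1 where "\<rho>1 = (\<lambda>x. if x \<in> K then \<rho> x else e x)"
  have "inj \<rho>1"
  proof (rule injI)
    fix x y assume xy: "\<rho>1 x = \<rho>1 y"
    show "x = y"
    proof (cases "x \<in> K")
      case True
      show ?thesis
      proof (cases "y \<in> K")
        case True
        then show ?thesis using xy \<open>x \<in> K\<close> assms(1) by (simp add: \<rho>1_def inj_eq)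
      next
        case False
        then have "\<rho> x = e y" using xy True by (simp add: \<rho>1_def)
        moreover have "e y \<notin> \<rho> ` K" using e(2) by blast
        ultimately show ?thesis using True by (metis imageI)
      qed
    next
      case False
      show ?thesis
      proof (cases "y \<in> K")
        case True
        then have "\<rho> y = e x" using xy False by (simp add: \<rho>1_def)
        moreover have "e x \<notin> \<rho> ` K" using e(2) by blast
        ultimately show ?thesis using True by (metis imageI)
      next
        case False
        then show ?thesis using xy \<open>x \<notin> K\<close> e(1) by (simp add: \<rho>1_def inj_eq)
      qed
    qed
  qed
  moreover have "\<forall>x\<in>K. \<rho>1 x = \<rho> x" by (simp add: \<rho>1_def)
  moreover have "\<forall>x. x \<notin> K \<longrightarrow> \<rho>1 x \<notin> X" using e(2) by (auto simp: \<rho>1_def)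
  ultimately show ?thesis by blast
qed

context setting begin

abbreviation "QV V \<equiv> (\<lambda>(D :: ('p,'f) atom). avars D \<inter> V = {})"
abbreviation "TT \<equiv> (\<lambda>(D :: ('p,'f) atom) (xs :: ('p,'f) goal). True)"

definition RB :: "nat set \<Rightarrow> ('p,'f) goal \<Rightarrow> ('p,'f) goal \<Rightarrow> bool" where
  "RB V X Y \<longleftrightarrow> rs (QV V) TT X Y \<or>
     (\<exists>X1 X2 D Y1 Y2. X = X1 @ Y1 \<and> Y = X2 @ D # Y2 \<and> rs (QV V) TT X1 X2 \<and> r0 (QV V) Y1 Y2
        \<and> isneq D \<and> \<not> isnu D \<and> avars D \<inter> (gvars X2 \<union> gvars Y2) = {})"

lemma RB_vars: "RB V X Y \<Longrightarrow> gvars X \<inter> V \<subseteq> gvars Y"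
  unfolding RB_def
proof (elim disjE exE conjE)
  assume "rs (QV V) TT X Y"
  then show ?thesis using r0_vars[OF rs_r0] by blast
next
  fix X1 X2 D Y1 Y2
  assume "X = X1 @ Y1" "Y = X2 @ D # Y2" "rs (QV V) TT X1 X2" "r0 (QV V) Y1 Y2"
  moreover have "gvars X1 \<inter> V \<subseteq> gvars X2" using r0_vars[OF rs_r0[OF \<open>rs (QV V) TT X1 X2\<close>]] .
  moreover have "gvars Y1 \<inter> V \<subseteq> gvars Y2" using r0_vars[OF \<open>r0 (QV V) Y1 Y2\<close>] .
  ultimately show ?thesis by auto
qed

lemma K_finite: "finite K" by (simp add: K_def)
lemma input_K: "x \<in> avars Dn \<Longrightarrow> x \<notin> Lset \<Longrightarrow> x \<in> K"
  using notL_input input_sub by (auto simp: K_def)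

lemma core:
  assumes st: "stepV P2 V (a # W2) Y'"
    and s1: "steps P1 [A0] (a # W1)" and A0: "nonbasic A0" "atom_sat A0 M"
    and vv: "gvars (a # W1) \<inter> V \<subseteq> gvars (a # W2)"
    and fV: "finite V"
  shows "\<exists>\<theta> B1 B2 S. step P1 (a # W1) (B1 @ gsubst W1 \<theta>) \<and> Y' = B2 @ gsubst W2 \<theta> \<and>
   (\<forall>x. \<theta> x = Var x \<or> (x \<in> avars a \<union> S \<and> tvars (\<theta> x) \<subseteq> avars a \<union> S)) \<and>
   avars a \<union> S \<subseteq> V \<and> S \<inter> gvars (a # W2) = {} \<and> gvars B2 \<subseteq> avars a \<union> S \<and>
   (rs (QV V) TT B1 B2 \<or> (\<exists>g1 g2 g3 D1 D2. B1 = g1 @ g2 @ D1 # g3 \<and> B2 = g1 @ D2 # g2 @ g3 \<and>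
       QV V D1 \<and> isneq D2 \<and> \<not> isnu D2 \<and>
       avars D2 \<inter> (gvars g1 \<union> gvars g2 \<union> gvars g3 \<union> gvars (gsubst W2 \<theta>)) = {}))"
  using st
proof cases
  case (eqV \<theta> u1 u2)
  have "step P1 (a # W1) ([] @ gsubst W1 \<theta>)" using eqV by (auto intro: step.eq)
  moreover have "\<forall>x. \<theta> x = Var x \<or> (x \<in> avars a \<union> {} \<and> tvars (\<theta> x) \<subseteq> avars a \<union> {})"
    using eqV by (auto simp: is_mgu_def)
  moreover have "avars a \<union> {} \<subseteq> V" using eqV by simp
  ultimately show ?thesis using eqV
    apply (intro exI[of _ \<theta>] exI[of _ "[]"] exI[of _ "[]"] exI[of _ "{}"])
    apply (intro conjI)
    apply (simp_all add: rs_nil)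
    done
next
  case (neqV u1 u2)
  have "step P1 (a # W1) ([] @ gsubst W1 Var)" using neqV by (auto intro: step.neq)
  moreover have "avars a \<union> {} \<subseteq> V" using neqV by simp
  ultimately show ?thesis using neqV
    apply (intro exI[of _ Var] exI[of _ "[]"] exI[of _ "[]"] exI[of _ "{}"])
    apply (intro conjI)
    apply (simp_all add: rs_nil)
    done
next
  case (resV C \<rho> C' E \<theta>)
  let ?S = "cvars C'"
  have ev: "eqvars E \<subseteq> avars a \<union> ?S"
    using eqvars_atom_eqs[OF resV(7)] by (auto simp: cvars_def)
  have shape: "\<forall>x. \<theta> x = Var x \<or> (x \<in> avars a \<union> ?S \<and> tvars (\<theta> x) \<subseteq> avars a \<union> ?S)"
    using resV(8) ev by (simp add: is_mgu_def) blast
  have bdS: "gvars (bd C') \<subseteq> ?S" by (auto simp: cvars_def)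
  have B2v: "gvars (gsubst (bd C') \<theta>) \<subseteq> avars a \<union> ?S"
    using shape_vars[OF shape, of "bd C'"] bdS by blast
  have common: "avars a \<union> ?S \<subseteq> V \<and> ?S \<inter> gvars (a # W2) = {}" using resV by auto
  have Y': "Y' = gsubst (bd C') \<theta> @ gsubst W2 \<theta>" using resV by simp
  from P2_cases[OF resV(3)] show ?thesis
  proof
    assume C: "C \<in> P1 \<and> C \<noteq> C1"
    have fr: "cvars C' \<inter> gvars (a # W1) = {}" using resV vv by auto
    have CP1: "C \<in> P1" using C by blast
    have st0: "step P1 (a # W1) (gsubst (bd C' @ W1) \<theta>)"
      by (rule step.res[OF resV(2) CP1 resV(4) resV(5) fr resV(7) resV(8)])
    have st1: "step P1 (a # W1) (gsubst (bd C') \<theta> @ gsubst W1 \<theta>)"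
      using st0 unfolding gsubst_simps(3) .
    have c1: "avars a \<union> ?S \<subseteq> V" and c2: "?S \<inter> gvars (a # W2) = {}" using common by auto
    show ?thesis
      apply (rule exI[of _ \<theta>], rule exI[of _ "gsubst (bd C') \<theta>"], rule exI[of _ "gsubst (bd C') \<theta>"],
         rule exI[of _ ?S])
      apply (intro conjI)
            apply (rule st1)
           apply (rule Y')
          apply (rule shape)
         apply (rule c1)
        apply (rule c2)
       apply (rule B2v)
      apply (rule disjI1, rule rs_refl)
      done
  next
    assume C: "C = C2"
    have as: "atom_sat a M"
      by (rule sat[unfolded prog_sat_def, rule_format, OF A0 s1 resV(2)])
    obtain \<rho>1 where \<rho>1: "inj \<rho>1" "\<forall>x\<in>K. \<rho>1 x = \<rho> x" "\<forall>x. x \<notin> K \<longrightarrow> \<rho>1 x \<notin> V \<union> gvars (a # W1)"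
      using fresh_ren[OF resV(4) K_finite, of "V \<union> gvars (a # W1)"] fV by auto
    have cvC': "?S = \<rho> ` (K \<union> avars Dn)" using resV C cvars_ren by simp
    have hdeq: "asubst hdA (\<lambda>x. Var (\<rho>1 x)) = asubst hdA (\<lambda>x. Var (\<rho> x))"
      using \<rho>1(2) by (intro asubst_cong) (auto simp: K_def)
    have ae: "atom_eqs a (asubst hdA (\<lambda>x. Var (\<rho> x))) = Some E" using resV C hd_ren by simp
    have ae1: "atom_eqs a (asubst hdA (\<lambda>x. Var (\<rho>1 x))) = Some E" using ae hdeq by simp
    have fr2: "\<rho> ` (K \<union> avars Dn) \<inter> gvars (a # W2) = {}" using resV cvC' by simp
    have fr1: "\<rho>1 ` (K \<union> avars Dn) \<inter> gvars (a # W1) = {}"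
    proof -
      { fix x assume x: "x \<in> K \<union> avars Dn" "\<rho>1 x \<in> gvars (a # W1)"
        have False
        proof (cases "x \<in> K")
          case True
          then have "\<rho> x \<in> ?S" using cvC' by auto
          then have "\<rho> x \<in> V" "\<rho> x \<notin> gvars (a # W2)" using common by auto
          then show False using vv x(2) \<rho>1(2) True by auto
        next
          case False then show False using \<rho>1(3) x(2) by blast
        qed }
      then show ?thesis by blast
    qed
    note R2 = resD[OF as resV(4) ae resV(8) fr2]
    note R1 = resD[OF as \<rho>1(1) ae1 resV(8) fr1]
    define r where "r = (\<lambda>x. Var (\<rho> x) :: 'f term)"
    have gi: "gsubst Gi (\<lambda>x. Var (\<rho>1 x)) = gsubst Gi r" if "gvars Gi \<subseteq> K" for Gi
      using \<rho>1(2) that by (auto simp: r_def intro!: gsubst_cong)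
    have gK: "gvars G1 \<subseteq> K" "gvars G2 \<subseteq> K" "gvars G3 \<subseteq> K" by (auto simp: K_def)
    define g1 where "g1 = gsubst (gsubst G1 r) \<theta>"
    define g2 where "g2 = gsubst (gsubst G2 r) \<theta>"
    define g3 where "g3 = gsubst (gsubst G3 r) \<theta>"
    define D1 where "D1 = asubst Dn (\<lambda>x. \<theta> (\<rho>1 x))"
    define D2 where "D2 = asubst Dn (\<lambda>x. \<theta> (\<rho> x))"
    have fr1': "cvars (rename_clause \<rho>1 C1) \<inter> gvars (a # W1) = {}" using fr1 cvars_ren by simp
    have stepF: "step P1 (a # W1) (gsubst (bd (rename_clause \<rho>1 C1) @ W1) \<theta>)"
      by (rule step.res[OF resV(2) C1inP1 \<rho>1(1) refl fr1' _ resV(8)]) (use ae1 hd_ren in simp)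
    have X1eq: "gsubst (bd (rename_clause \<rho>1 C1) @ W1) \<theta> = (g1 @ g2 @ D1 # g3) @ gsubst W1 \<theta>"
      using gi[OF gK(1)] gi[OF gK(2)] gi[OF gK(3)]
      by (simp add: bd_ren g1_def g2_def g3_def D1_def Dsub)
    have B2: "gsubst (bd C') \<theta> = g1 @ D2 # g2 @ g3"
      using resV C by (simp add: bd_ren g1_def g2_def g3_def D2_def Dsub r_def)
    have QD1: "QV V D1"
    proof -
      { fix z assume "z \<in> avars D1" "z \<in> V"
        then obtain l where "l \<in> Lset" "z = \<rho>1 l" using R1(2) D1_def by blast
        then have False using \<rho>1(3) Lset_K \<open>z \<in> V\<close> by blast }
      then show ?thesis by blast
    qed
    have equiv: "isnu D2 \<longleftrightarrow> isnu D1"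
    proof -
      have c: "(\<theta> (\<rho> x) = \<theta> (\<rho>1 x) \<and> ground (\<theta> (\<rho> x))) \<or>
               (\<theta> (\<rho> x) = Var (\<rho> x) \<and> \<theta> (\<rho>1 x) = Var (\<rho>1 x))" if "x \<in> avars Dn" for x
      proof (cases "x \<in> Lset")
        case True
        then show ?thesis using R1(1)[rule_format, OF that] R2(1)[rule_format, OF that] by blast
      next
        case False
        then have "\<rho>1 x = \<rho> x" using input_K[OF that] \<rho>1(2) by blast
        then show ?thesis using R2(1)[rule_format, OF that] False by simp
      qed
      have c': "(\<theta> (\<rho>1 x) = \<theta> (\<rho> x) \<and> ground (\<theta> (\<rho>1 x))) \<or>
               (\<theta> (\<rho>1 x) = Var (\<rho>1 x) \<and> \<theta> (\<rho> x) = Var (\<rho> x))" if "x \<in> avars Dn" for x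
        using c[OF that] by auto
      show ?thesis unfolding D1_def D2_def
        using nu_transfer[OF resV(4) c] nu_transfer[OF \<rho>1(1) c'] by blast
    qed
    have priv: "avars D2 \<inter> (gvars g1 \<union> gvars g2 \<union> gvars g3 \<union> gvars (gsubst W2 \<theta>)) = {}"
      using R2(3) by (auto simp: g1_def g2_def g3_def D2_def r_def)
    have isneqD2: "isneq D2" by (simp add: D2_def isneq_Dn)
    have rsnu: "isnu D2 \<Longrightarrow> rs (QV V) TT (g1 @ g2 @ D1 # g3) (g1 @ D2 # g2 @ g3)"
      apply (rule rs_prefix)
      apply (rule rs_two)
        apply (rule rs_prefix)
        apply (rule rs_one[OF rs_refl])
      using equiv QD1 by auto
    have step': "step P1 (a # W1) ((g1 @ g2 @ D1 # g3) @ gsubst W1 \<theta>)"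
      using stepF X1eq by simp
    have Y'': "Y' = (g1 @ D2 # g2 @ g3) @ gsubst W2 \<theta>"
      using Y' B2 by simp
    have gB2: "gvars (g1 @ D2 # g2 @ g3) \<subseteq> avars a \<union> ?S"
      using B2v B2 by simp
    have last: "rs (QV V) TT (g1 @ g2 @ D1 # g3) (g1 @ D2 # g2 @ g3) \<or>
        (\<exists>g1' g2' g3' D1' D2'. g1 @ g2 @ D1 # g3 = g1' @ g2' @ D1' # g3' \<and> g1 @ D2 # g2 @ g3 = g1' @ D2' # g2' @ g3' \<and>
         QV V D1' \<and> isneq D2' \<and> \<not> isnu D2' \<and>
         avars D2' \<inter> (gvars g1' \<union> gvars g2' \<union> gvars g3' \<union> gvars (gsubst W2 \<theta>)) = {})"
    proof (cases "isnu D2")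
      case True then show ?thesis using rsnu by blast
    next
      case False
      show ?thesis
        apply (rule disjI2)
        apply (rule exI[of _ g1], rule exI[of _ g2], rule exI[of _ g3], rule exI[of _ D1], rule exI[of _ D2])
        using QD1 isneqD2 False priv by simp
    qed
    have c1: "avars a \<union> ?S \<subseteq> V" and c2: "?S \<inter> gvars (a # W2) = {}" using common by auto
    show ?thesis
      apply (rule exI[of _ \<theta>], rule exI[of _ "g1 @ g2 @ D1 # g3"], rule exI[of _ "g1 @ D2 # g2 @ g3"],
         rule exI[of _ ?S])
      apply (intro conjI)
            apply (rule step')
           apply (rule Y'')
          apply (rule shape)
         apply (rule c1)
        apply (rule c2)
       apply (rule gB2)
      apply (rule last)
      done
  qed
qed

end



context setting begin

lemma stepV_nonempty: "stepV P V Y Y' \<Longrightarrow> \<exists>a Yr. Y = a # Yr"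
  using step_Nil stepV_step by (cases Y) blast+

lemma stepV_Neq: "stepV P V (D # Y) Y' \<Longrightarrow> isneq D \<Longrightarrow> Y' = Y \<and> isnu D"
proof -
  assume st: "stepV P V (D # Y) Y'" and n: "isneq D"
  then obtain s t where D: "D = Neq s t" by (cases D) auto
  show ?thesis using step_Neq[OF stepV_step[OF st[unfolded D]]] D by simp
qed

lemma isnu_isneq: "isnu D \<Longrightarrow> isneq D" by (cases D) auto

lemma priv_subst:
  assumes "\<forall>x. \<theta> x = Var x \<or> (x \<in> T \<and> tvars (\<theta> x) \<subseteq> T)" "avars D \<inter> T = {}"
    "avars D \<inter> gvars Z = {}"
  shows "avars D \<inter> gvars (gsubst Z \<theta>) = {}"
  using shape_vars[OF assms(1), of Z] assms(2,3) by blast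

lemma sim21_step:
  assumes fV: "finite V" and s1: "steps P1 [A0] X" and A0: "nonbasic A0" "atom_sat A0 M"
    and rb: "RB V X Y" and st: "stepV P2 V Y Y'"
  shows "\<exists>X'. steps P1 X X' \<and> RB V X' Y'"
proof -
  have vv: "gvars X \<inter> V \<subseteq> gvars Y" using RB_vars[OF rb] .
  from rb[unfolded RB_def] show ?thesis
  proof (elim disjE exE conjE)
    assume c1: "rs (QV V) TT X Y"
    obtain a Yr where Y: "Y = a # Yr" using stepV_nonempty[OF st] by blast
    from rs_inv2[OF c1 Y] obtain Ds X'' where X: "X = Ds @ X''" and nuDs: "\<forall>D\<in>set Ds. isnu D \<and> QV V D"
      and dj: "(\<exists>Xr. X'' = a # Xr \<and> rs (QV V) TT Xr Yr) \<or> (isnu a \<and> rs (QV V) TT X'' Yr)" by blast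
    have sD: "steps P1 X X''" unfolding X by (rule steps_isnus) (use nuDs in blast)
    from dj show ?thesis
    proof (elim disjE exE conjE)
      assume a: "isnu a" and r: "rs (QV V) TT X'' Yr"
      have "Y' = Yr" using stepV_Neq[OF st[unfolded Y] isnu_isneq[OF a]] by blast
      moreover have "RB V X'' Yr" unfolding RB_def using r by (rule disjI1)
      ultimately show ?thesis using sD by blast
    next
      fix Xr assume X'': "X'' = a # Xr" and r: "rs (QV V) TT Xr Yr"
      have s1': "steps P1 [A0] (a # Xr)" using steps_trans[OF s1 sD] X'' by simp
      have vv': "gvars (a # Xr) \<inter> V \<subseteq> gvars (a # Yr)" using vv X X'' Y by auto
      from core[OF st[unfolded Y] s1' A0 vv' fV] obtain \<theta> B1 B2 S where
        cs: "step P1 (a # Xr) (B1 @ gsubst Xr \<theta>)" and cY: "Y' = B2 @ gsubst Yr \<theta>"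
        and csh: "\<forall>x. \<theta> x = Var x \<or> (x \<in> avars a \<union> S \<and> tvars (\<theta> x) \<subseteq> avars a \<union> S)"
        and cV: "avars a \<union> S \<subseteq> V"
        and cR: "rs (QV V) TT B1 B2 \<or> (\<exists>g1 g2 g3 D1 D2. B1 = g1 @ g2 @ D1 # g3 \<and> B2 = g1 @ D2 # g2 @ g3 \<and>
           QV V D1 \<and> isneq D2 \<and> \<not> isnu D2 \<and>
           avars D2 \<inter> (gvars g1 \<union> gvars g2 \<union> gvars g3 \<union> gvars (gsubst Yr \<theta>)) = {})"
        apply (elim exE conjE) apply (rule that) apply assumption+ done
      have qfix: "asubst D \<theta> = D" if "QV V D" for D
        using shape_fix[OF csh] that cV by blast
      have rsub: "rs (QV V) TT (gsubst Xr \<theta>) (gsubst Yr \<theta>)"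
        by (rule rs_subst[OF r]) (simp_all add: qfix)
      have sX: "steps P1 X (B1 @ gsubst Xr \<theta>)"
        using steps_trans[OF sD steps_step[OF cs[folded X'']]] by (simp add: steps_def)
      from cR show ?thesis
      proof (elim disjE exE conjE)
        assume "rs (QV V) TT B1 B2"
        then have "rs (QV V) TT (B1 @ gsubst Xr \<theta>) (B2 @ gsubst Yr \<theta>)"
          using rs_app[OF _ rsub] by simp
        then have "RB V (B1 @ gsubst Xr \<theta>) Y'" unfolding RB_def cY by (rule disjI1)
        then show ?thesis using sX by blast
      next
        fix g1 g2 g3 D1 D2
        assume B1: "B1 = g1 @ g2 @ D1 # g3" and B2: "B2 = g1 @ D2 # g2 @ g3" and q: "QV V D1"
          and n1: "isneq D2" and n2: "\<not> isnu D2"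
          and pv: "avars D2 \<inter> (gvars g1 \<union> gvars g2 \<union> gvars g3 \<union> gvars (gsubst Yr \<theta>)) = {}"
        have r0': "r0 (QV V) (g2 @ D1 # g3 @ gsubst Xr \<theta>) (g2 @ g3 @ gsubst Yr \<theta>)"
          by (rule r0_prefix, rule r0_one[OF r0_prefix[OF rs_r0[OF rsub]] q])
        have e1: "B1 @ gsubst Xr \<theta> = g1 @ (g2 @ D1 # g3 @ gsubst Xr \<theta>)" using B1 by simp
        have e2: "Y' = g1 @ D2 # (g2 @ g3 @ gsubst Yr \<theta>)" using cY B2 by simp
        have pv': "avars D2 \<inter> (gvars g1 \<union> gvars (g2 @ g3 @ gsubst Yr \<theta>)) = {}" using pv by auto
        have "RB V (B1 @ gsubst Xr \<theta>) Y'"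
          unfolding RB_def
          apply (rule disjI2)
          apply (rule exI[of _ g1], rule exI[of _ g1], rule exI[of _ D2],
                 rule exI[of _ "g2 @ D1 # g3 @ gsubst Xr \<theta>"], rule exI[of _ "g2 @ g3 @ gsubst Yr \<theta>"])
          apply (intro conjI)
                apply (rule e1)
               apply (rule e2)
              apply (rule rs_refl)
             apply (rule r0')
            apply (rule n1)
           apply (rule n2)
          apply (rule pv')
          done
        then show ?thesis using sX by blast
      qed
    qed
  next
    fix X1 X2 D Y1 Y2
    assume X: "X = X1 @ Y1" and Y: "Y = X2 @ D # Y2" and r1: "rs (QV V) TT X1 X2"
      and r2: "r0 (QV V) Y1 Y2" and nD: "isneq D" and nD2: "\<not> isnu D"
      and pD: "avars D \<inter> (gvars X2 \<union> gvars Y2) = {}"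
    show ?thesis
    proof (cases X2)
      case Nil
      then have "isnu D" using stepV_Neq[OF st[unfolded Y Nil, simplified] nD] by blast
      then show ?thesis using nD2 by blast
    next
      case (Cons a X2r)
      from rs_inv2[OF r1 Cons] obtain Ds X1'' where X1: "X1 = Ds @ X1''"
        and nuDs: "\<forall>D\<in>set Ds. isnu D \<and> QV V D"
        and dj: "(\<exists>Xr. X1'' = a # Xr \<and> rs (QV V) TT Xr X2r) \<or> (isnu a \<and> rs (QV V) TT X1'' X2r)" by blast
      have sD: "steps P1 X (X1'' @ Y1)" unfolding X X1 by (simp, rule steps_isnus) (use nuDs in blast)
      from dj show ?thesis
      proof (elim disjE exE conjE)
        assume a: "isnu a" and r: "rs (QV V) TT X1'' X2r"
        have "Y' = X2r @ D # Y2" using stepV_Neq[OF st[unfolded Y Cons, simplified] isnu_isneq[OF a]] by blast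
        moreover have "avars D \<inter> (gvars X2r \<union> gvars Y2) = {}" using pD Cons by auto
        ultimately have "RB V (X1'' @ Y1) Y'" unfolding RB_def
          apply -
          apply (rule disjI2)
          apply (rule exI[of _ X1''], rule exI[of _ X2r], rule exI[of _ D],
                 rule exI[of _ Y1], rule exI[of _ Y2])
          apply (intro conjI)
          using r r2 nD nD2 by simp_all
        then show ?thesis using sD by blast
      next
        fix X1r assume X1'': "X1'' = a # X1r" and r: "rs (QV V) TT X1r X2r"
        let ?W1 = "X1r @ Y1" and ?W2 = "X2r @ D # Y2"
        have s1': "steps P1 [A0] (a # ?W1)" using steps_trans[OF s1 sD] X1'' by simp
        have vv': "gvars (a # ?W1) \<inter> V \<subseteq> gvars (a # ?W2)" using vv X X1 X1'' Y Cons by auto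
        have st': "stepV P2 V (a # ?W2) Y'" using st Y Cons by simp
        from core[OF st' s1' A0 vv' fV] obtain \<theta> B1 B2 S where
          cs: "step P1 (a # ?W1) (B1 @ gsubst ?W1 \<theta>)" and cY: "Y' = B2 @ gsubst ?W2 \<theta>"
          and csh: "\<forall>x. \<theta> x = Var x \<or> (x \<in> avars a \<union> S \<and> tvars (\<theta> x) \<subseteq> avars a \<union> S)"
          and cV: "avars a \<union> S \<subseteq> V" and cS: "S \<inter> gvars (a # ?W2) = {}"
          and cB2: "gvars B2 \<subseteq> avars a \<union> S"
          and cR: "rs (QV V) TT B1 B2 \<or> (\<exists>g1 g2 g3 D1 D2. B1 = g1 @ g2 @ D1 # g3 \<and> B2 = g1 @ D2 # g2 @ g3 \<and>
             QV V D1 \<and> isneq D2 \<and> \<not> isnu D2 \<and>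
             avars D2 \<inter> (gvars g1 \<union> gvars g2 \<union> gvars g3 \<union> gvars (gsubst ?W2 \<theta>)) = {})"
          apply (elim exE conjE) apply (rule that) apply assumption+ done
        have qfix: "asubst D' \<theta> = D'" if "QV V D'" for D'
          using shape_fix[OF csh] that cV by blast
        have DT: "avars D \<inter> (avars a \<union> S) = {}" using pD cS Cons by auto
        have Dfix: "asubst D \<theta> = D" using shape_fix[OF csh DT] .
        have W2: "gsubst ?W2 \<theta> = gsubst X2r \<theta> @ D # gsubst Y2 \<theta>" using Dfix by simp
        have rsub: "rs (QV V) TT (gsubst X1r \<theta>) (gsubst X2r \<theta>)"
          by (rule rs_subst[OF r]) (simp_all add: qfix)
        have r0sub: "r0 (QV V) (gsubst Y1 \<theta>) (gsubst Y2 \<theta>)"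
          by (rule r0_subst[OF r2]) (simp add: qfix)
        have pX2r: "avars D \<inter> gvars (gsubst X2r \<theta>) = {}"
          by (rule priv_subst[OF csh DT]) (use pD Cons in auto)
        have pY2: "avars D \<inter> gvars (gsubst Y2 \<theta>) = {}"
          by (rule priv_subst[OF csh DT]) (use pD in auto)
        have pB2: "avars D \<inter> gvars B2 = {}" using cB2 DT by blast
        have sX: "steps P1 X (B1 @ gsubst X1r \<theta> @ gsubst Y1 \<theta>)"
        proof -
          have sD': "steps P1 X (a # ?W1)" using sD X1'' by simp
          have "steps P1 (B1 @ gsubst ?W1 \<theta>) (B1 @ gsubst ?W1 \<theta>)" by (simp add: steps_def)
          then show ?thesis using steps_trans[OF sD' steps_step[OF cs]] by simp
        qed
        from cR show ?thesis
        proof (elim disjE exE conjE)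
          assume "rs (QV V) TT B1 B2"
          then have rr: "rs (QV V) TT (B1 @ gsubst X1r \<theta>) (B2 @ gsubst X2r \<theta>)"
            using rs_app[OF _ rsub] by simp
          have e1: "B1 @ gsubst X1r \<theta> @ gsubst Y1 \<theta> = (B1 @ gsubst X1r \<theta>) @ gsubst Y1 \<theta>" by simp
          have e2: "Y' = (B2 @ gsubst X2r \<theta>) @ D # gsubst Y2 \<theta>" using cY W2 by simp
          have pv: "avars D \<inter> (gvars (B2 @ gsubst X2r \<theta>) \<union> gvars (gsubst Y2 \<theta>)) = {}"
            using pX2r pY2 pB2 by auto
          have "RB V (B1 @ gsubst X1r \<theta> @ gsubst Y1 \<theta>) Y'"
            unfolding RB_def
            apply (rule disjI2)
            apply (rule exI[of _ "B1 @ gsubst X1r \<theta>"], rule exI[of _ "B2 @ gsubst X2r \<theta>"], rule exI[of _ D],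
                 rule exI[of _ "gsubst Y1 \<theta>"], rule exI[of _ "gsubst Y2 \<theta>"])
            apply (intro conjI)
                  apply (rule e1)
                 apply (rule e2)
                apply (rule rr)
               apply (rule r0sub)
              apply (rule nD)
             apply (rule nD2)
            apply (rule pv)
            done
          then show ?thesis using sX by blast
        next
          fix g1 g2 g3 D1 D2
          assume B1: "B1 = g1 @ g2 @ D1 # g3" and B2: "B2 = g1 @ D2 # g2 @ g3" and q: "QV V D1"
            and n1: "isneq D2" and n2: "\<not> isnu D2"
            and pv: "avars D2 \<inter> (gvars g1 \<union> gvars g2 \<union> gvars g3 \<union> gvars (gsubst ?W2 \<theta>)) = {}"
          let ?Y1 = "g2 @ D1 # g3 @ gsubst X1r \<theta> @ gsubst Y1 \<theta>"
          let ?Y2 = "g2 @ g3 @ gsubst X2r \<theta> @ D # gsubst Y2 \<theta>"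
          have r0': "r0 (QV V) ?Y1 ?Y2"
            by (rule r0_prefix, rule r0_one[OF r0_prefix[OF r0_app[OF rs_r0[OF rsub] r0_two[OF r0sub]]] q])
          have e1: "B1 @ gsubst X1r \<theta> @ gsubst Y1 \<theta> = g1 @ ?Y1" using B1 by simp
          have e2: "Y' = g1 @ D2 # ?Y2" using cY B2 W2 by simp
          have pv': "avars D2 \<inter> (gvars g1 \<union> gvars ?Y2) = {}" using pv W2 by auto
          have "RB V (B1 @ gsubst X1r \<theta> @ gsubst Y1 \<theta>) Y'"
            unfolding RB_def
            apply (rule disjI2)
            apply (rule exI[of _ g1], rule exI[of _ g1], rule exI[of _ D2],
                   rule exI[of _ ?Y1], rule exI[of _ ?Y2])
            apply (intro conjI)
                  apply (rule e1)
                 apply (rule e2)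
                apply (rule rs_refl)
               apply (rule r0')
              apply (rule n1)
             apply (rule n2)
            apply (rule pv')
            done
          then show ?thesis using sX by blast
        qed
      qed
    qed
  qed
qed

end



lemma others_iff:
  assumes "i < length xs"
  shows "(\<forall>j<length xs. j \<noteq> i \<longrightarrow> x \<notin> avars (xs ! j)) \<longleftrightarrow> x \<notin> gvars (take i xs @ drop (Suc i) xs)"
proof
  assume H: "\<forall>j<length xs. j \<noteq> i \<longrightarrow> x \<notin> avars (xs ! j)"
  show "x \<notin> gvars (take i xs @ drop (Suc i) xs)"
  proof
    assume "x \<in> gvars (take i xs @ drop (Suc i) xs)"
    then obtain b where b: "b \<in> set (take i xs) \<or> b \<in> set (drop (Suc i) xs)" "x \<in> avars b"
      by (auto simp: gvars_set)
    from b(1) show False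
    proof
      assume "b \<in> set (take i xs)"
      then obtain k where "k < length (take i xs)" "take i xs ! k = b" by (auto simp: in_set_conv_nth)
      then show False using H b(2) assms by (auto simp: nth_take)
    next
      assume "b \<in> set (drop (Suc i) xs)"
      then obtain k where "k < length (drop (Suc i) xs)" "drop (Suc i) xs ! k = b" by (auto simp: in_set_conv_nth)
      then have "Suc i + k < length xs" "xs ! (Suc i + k) = b" by auto
      then show False using H[rule_format, of "Suc i + k"] b(2) by auto
    qed
  qed
next
  assume H: "x \<notin> gvars (take i xs @ drop (Suc i) xs)"
  show "\<forall>j<length xs. j \<noteq> i \<longrightarrow> x \<notin> avars (xs ! j)"
  proof (intro allI impI)
    fix j assume j: "j < length xs" "j \<noteq> i"
    show "x \<notin> avars (xs ! j)"
    proof (cases "j < i")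
      case True
      then have "xs ! j \<in> set (take i xs)" using j by (auto simp: in_set_conv_nth intro!: exI[of _ j])
      then show ?thesis using H by (auto simp: gvars_set)
    next
      case False
      then have "xs ! j = drop (Suc i) xs ! (j - Suc i)" using j by auto
      moreover have "j - Suc i < length (drop (Suc i) xs)" using j False by auto
      ultimately have "xs ! j \<in> set (drop (Suc i) xs)" by (metis nth_mem)
      then show ?thesis using H by (auto simp: gvars_set)
    qed
  qed
qed

lemma mset_others: "i < length xs \<Longrightarrow> mset (take i xs @ drop (Suc i) xs) = mset xs - {#xs ! i#}"
proof -
  assume i: "i < length xs"
  have "mset xs = mset (take i xs @ xs ! i # drop (Suc i) xs)" using id_take_nth_drop[OF i] by simp
  then show ?thesis by simp
qed

lemma local_var_alt: "local_var x i C \<longleftrightarrow> i < length (bd C) \<and> x \<in> avars (bd C ! i) \<and>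
   x \<notin> avars (hd_atom C) \<and> x \<notin> gvars (take i (bd C) @ drop (Suc i) (bd C))"
  unfolding local_var_def using others_iff by blast

lemma gvars_mset: "mset xs = mset ys \<Longrightarrow> gvars xs = gvars ys"
  unfolding gvars_set by (metis set_mset_mset)

lemma safe_perm:
  assumes s: "clause_safe C M" and h: "hd_atom C' = hd_atom C" and m: "mset (bd C') = mset (bd C)"
  shows "clause_safe C' M"
  unfolding clause_safe_def
proof (intro allI impI ballI)
  fix i t1 t2 x
  assume i: "i < length (bd C')" and bi: "bd C' ! i = Neq t1 t2" and x: "x \<in> tvars t1 \<union> tvars t2"
  have "Neq t1 t2 \<in> set (bd C)" using m i bi by (metis nth_mem set_mset_mset)
  then obtain j where j: "j < length (bd C)" "bd C ! j = Neq t1 t2" by (auto simp: in_set_conv_nth)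
  from s j x have "x \<in> input_vars M (hd_atom C) \<or> local_var x j C" unfolding clause_safe_def by blast
  then show "x \<in> input_vars M (hd_atom C') \<or> local_var x i C'"
  proof
    assume "x \<in> input_vars M (hd_atom C)" then show ?thesis using h by simp
  next
    assume l: "local_var x j C"
    have "mset (take i (bd C') @ drop (Suc i) (bd C')) = mset (take j (bd C) @ drop (Suc j) (bd C))"
      using mset_others[OF i] mset_others[OF j(1)] m bi j(2) by simp
    then have "gvars (take i (bd C') @ drop (Suc i) (bd C')) = gvars (take j (bd C) @ drop (Suc j) (bd C))"
      by (rule gvars_mset)
    then show ?thesis using l i bi j h unfolding local_var_alt by simp
  qed
qed

context setting begin

lemma P2_safe: "prog_safe P2 M"
  unfolding prog_safe_def
proof
  fix C assume "C \<in> P2"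
  then consider "C = C2" | "C \<in> P1" using P2_cases by blast
  then show "clause_safe C M"
  proof cases
    case 1
    have "clause_safe C1 M" using safe C1inP1 by (simp add: prog_safe_def)
    moreover have "mset (bd C2) = mset (bd C1)" by (simp add: bd_C)
    ultimately show ?thesis using safe_perm hd_C 1 by metis
  next
    case 2 then show ?thesis using safe by (simp add: prog_safe_def)
  qed
qed

lemma sim21:
  assumes "(stepV P2 V)\<^sup>*\<^sup>* Y Y'" "finite V" "nonbasic A0" "atom_sat A0 M" "steps P1 [A0] X" "RB V X Y"
  shows "\<exists>X'. steps P1 X X' \<and> RB V X' Y'"
  using assms(1)
proof (induction rule: rtranclp_induct)
  case base
  then show ?case using assms(6) by (auto simp: steps_def)
next
  case (step Yk Yk1)
  then obtain Xk where Xk: "steps P1 X Xk" "RB V Xk Yk" by blast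
  have "steps P1 [A0] Xk" using steps_trans[OF assms(5) Xk(1)] .
  from sim21_step[OF assms(2) this assms(3,4) Xk(2) step(2)] obtain X' where
    "steps P1 Xk X'" "RB V X' Yk1" by blast
  then show ?case using steps_trans[OF Xk(1)] by blast
qed

lemma RB_front:
  assumes "RB V X (A # G)" "nonbasic A"
  shows "\<exists>Xr. steps P1 X (A # Xr)"
proof -
  have nA: "\<not> isneq A" "\<not> isnu A" using assms(2) by (cases A; simp)+
  have front: "\<exists>Xr. steps P1 X1 (A # Xr) \<and> (\<forall>Z. steps P1 (X1 @ Z) (A # Xr @ Z))"
    if r: "rs (QV V) TT X1 (A # Yr)" for X1 Yr
  proof -
    from rs_inv2[OF r refl] obtain Ds X'' where X1: "X1 = Ds @ X''" and nuDs: "\<forall>D\<in>set Ds. isnu D \<and> QV V D"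
      and dj: "(\<exists>Xr. X'' = A # Xr \<and> rs (QV V) TT Xr Yr) \<or> (isnu A \<and> rs (QV V) TT X'' Yr)" by blast
    from dj nA obtain Xr where "X'' = A # Xr" by blast
    moreover have "\<forall>D\<in>set Ds. isnu D" using nuDs by blast
    ultimately show ?thesis using X1 steps_isnus[of Ds P1] by force
  qed
  from assms(1)[unfolded RB_def] show ?thesis
  proof (elim disjE exE conjE)
    assume "rs (QV V) TT X (A # G)"
    then show ?thesis using front by blast
  next
    fix X1 X2 D Y1 Y2
    assume X: "X = X1 @ Y1" and Y: "A # G = X2 @ D # Y2" and r: "rs (QV V) TT X1 X2" and n: "isneq D"
    show ?thesis
    proof (cases X2)
      case Nil then show ?thesis using Y n nA by simp
    next
      case (Cons b X2r)
      then have "b = A" using Y by simp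
      then show ?thesis using front[of X1 X2r] r Cons X by blast
    qed
  qed
qed

lemma P2_sat: "prog_sat P2 M"
  unfolding prog_sat_def
proof (intro allI impI)
  fix A0 A G
  assume A0: "nonbasic A0" "atom_sat A0 M" and s: "steps P2 [A0] (A # G)" and nA: "nonbasic A"
  obtain V where V: "finite V" "(stepV P2 V)\<^sup>*\<^sup>* [A0] (A # G)" using steps_stepsV[OF s] by blast
  have rb0: "RB V [A0] [A0]" unfolding RB_def using rs_refl by blast
  have s0: "steps P1 [A0] [A0]" by (simp add: steps_def)
  obtain X' where X': "steps P1 [A0] X'" "RB V X' (A # G)"
    using sim21[OF V(2) V(1) A0 s0 rb0] by blast
  obtain Xr where "steps P1 X' (A # Xr)" using RB_front[OF X'(2) nA] by blast
  then have "steps P1 [A0] (A # Xr)" using steps_trans[OF X'(1)] by blast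
  then show "atom_sat A M" using sat A0 nA unfolding prog_sat_def by blast
qed

lemma sim21_succ: "nonbasic A \<Longrightarrow> atom_sat A M \<Longrightarrow> succeeds [A] P2 \<Longrightarrow> succeeds [A] P1"
proof -
  assume A0: "nonbasic A" "atom_sat A M" "succeeds [A] P2"
  obtain V where V: "finite V" "(stepV P2 V)\<^sup>*\<^sup>* [A] []"
    using steps_stepsV A0(3) unfolding succeeds_def by blast
  have rb0: "RB V [A] [A]" unfolding RB_def using rs_refl by blast
  have s0: "steps P1 [A] [A]" by (simp add: steps_def)
  obtain X' where X': "steps P1 [A] X'" "RB V X' []"
    using sim21[OF V(2) V(1) A0(1,2) s0 rb0] by blast
  have "rs (QV V) TT X' []" using X'(2) unfolding RB_def by auto
  then have "\<forall>D\<in>set X'. isnu D" using rs_Nil2 by blast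
  then have "steps P1 X' []" using steps_isnus[of X' P1 "[]"] by simp
  then show ?thesis using steps_trans[OF X'(1)] unfolding succeeds_def by blast
qed

lemma main: "prog_safe P2 M \<and> prog_sat P2 M \<and>
         (\<forall>A. nonbasic A \<longrightarrow> atom_sat A M \<longrightarrow> (succeeds [A] P1 \<longleftrightarrow> succeeds [A] P2))"
  using P2_safe P2_sat sim12 sim21_succ by blast

end



theorem proposition1:
  fixes P1 :: "('p, 'f::infinite) clause set" and M :: "'p mode"
    and H :: "'p \<times> 'f term list" and G1 G2 G3 :: "('p, 'f) goal"
    and t1 t2 :: "'f term"
  assumes "mode_for_program M P1"
    and "prog_safe P1 M"
    and "prog_sat P1 M"
    and "(H, G1 @ G2 @ [Neq t1 t2] @ G3) \<in> P1"
    and "P2 = (P1 - {(H, G1 @ G2 @ [Neq t1 t2] @ G3)}) \<union> {(H, G1 @ [Neq t1 t2] @ G2 @ G3)}"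
  shows "prog_safe P2 M \<and> prog_sat P2 M \<and>
         (\<forall>A. nonbasic A \<longrightarrow> atom_sat A M \<longrightarrow> (succeeds [A] P1 \<longleftrightarrow> succeeds [A] P2))"
proof -
  interpret setting P1 P2 M H G1 G2 G3 t1 t2
    using assms by unfold_locales
  show ?thesis by (rule main)
qed

end
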